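(* In the two-firm setting below, assume there are no equity cross-holdings ($M^s_{12}=M^s_{21}=0$) and that $\rho\in(-1,1)$; the debt cross-holdings $M^d_{12},M^d_{21}\in[0,1)$ are arbitrary. Keep $t<T$, and hence $\tau=T-t$, fixed. Let the current asset values $(a_1,a_2)=(a_{1,t},a_{2,t})$ tend to infinity, $a_1,a_2\to\infty$, along any path on which $a_1/a_2$ stays bounded and bounded away from $0$. Then the equity correlation satisfies $\rho^s\to\rho$.
   Context: Two-firm network model ($n=2$). Cross-holdings. $M^s_{12},M^s_{21},M^d_{12},M^d_{21}\in[0,1)$ are equity/debt cross-holding fractions: firm $i$ holds fraction $M^s_{ij}$ of firm $j$'s equity and fraction $M^d_{ij}$ of firm $j$'s debt. Diagonal entries are zero. Nominal debts are $d_1,d_2>0$. Payoffs at maturity. For terminal external asset values $\mathbf{a}_T\in(0,\infty)^2$, the terminal equity and debt values $\mathbf{x}^*(\mathbf{a}_T)=(s_1^*,s_2^*,r_1^*,r_2^* )$ are the unique solution of $$s_i=\max\Big\{0,\;a_{i,T}+\sum_j M^s_{ij}s_j+\sum_j M^d_{ij}r_j-d_i\Big\},$$ $$r_i=\min\Big\{d_i,\;a_{i,T}+\sum_j M^s_{ij}s_j+\sum_j M^d_{ij}r_j\Big\}.$$ Asset dynamics. Under the risk-neutral measure $Q$ the external assets follow the correlated geometric Brownian motion $$dA_{i,t}=rA_{i,t}\,dt+\sigma_iA_{i,t}\,dW_{i,t},$$ with interest rate $r$, volatilities $\sigma_1,\sigma_2>0$, and $d\langle W_1,W_2\rangle_t=\rho\,dt$.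 Prices and Deltas. With $\tau=T-t$, the time-$t$ equity prices are $$s_i=s_{i,t}=\mathbb{E}^Q_t\big[e^{-r\tau}s_i^*(\mathbf{A}_T)\big]$$ as functions of the current asset values $a_1,a_2$. The equity Deltas are $\Delta_{ij}=\partial s_{i,t}/\partial a_{j,t}$; write $\boldsymbol{\Delta}=(\Delta_{ij})$. Equity correlation. Let $\boldsymbol{\Sigma}=\begin{pmatrix}\sigma_1^2&\rho\sigma_1\sigma_2\\ \rho\sigma_1\sigma_2&\sigma_2^2\end{pmatrix}$ be the asset covariance matrix. The instantaneous equity covariance matrix is $$\boldsymbol{\Sigma}^s=\operatorname{diag}(s_1,s_2)^{-1}\,\boldsymbol{\Delta}\,\operatorname{diag}(a_1,a_2)\,\boldsymbol{\Sigma}\,\operatorname{diag}(a_1,a_2)\,\boldsymbol{\Delta}^T\operatorname{diag}(s_1,s_2)^{-1},$$ and the equity correlation is $\rho^s=\Sigma^s_{12}/\sqrt{\Sigma^s_{11}\Sigma^s_{22}}$. *)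

theory Defs
  imports "HOL-Probability.Probability"
begin

definition is_clearing ::
  "real \<Rightarrow> real \<Rightarrow> real \<Rightarrow> real \<Rightarrow> real \<Rightarrow> real \<Rightarrow> real \<Rightarrow> real
   \<Rightarrow> real \<times> real \<times> real \<times> real \<Rightarrow> bool" where
  "is_clearing Ms12 Ms21 Md12 Md21 d1 d2 a1 a2 x =
     (case x of (s1, s2, r1, r2) \<Rightarrow>
        s1 = max 0 (a1 + Ms12 * s2 + Md12 * r2 - d1) \<and>
        s2 = max 0 (a2 + Ms21 * s1 + Md21 * r1 - d2) \<and>
        r1 = min d1 (a1 + Ms12 * s2 + Md12 * r2) \<and>
        r2 = min d2 (a2 + Ms21 * s1 + Md21 * r1))"

definition terminal_values ::
  "real \<Rightarrow> real \<Rightarrow> real \<Rightarrow> real \<Rightarrow> real \<Rightarrow> real \<Rightarrow> real \<Rightarrow> real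
   \<Rightarrow> real \<times> real \<times> real \<times> real" where
  "terminal_values Ms12 Ms21 Md12 Md21 d1 d2 a1 a2 =
     (THE x. is_clearing Ms12 Ms21 Md12 Md21 d1 d2 a1 a2 x)"

definition terminal_equity ::
  "real \<Rightarrow> real \<Rightarrow> real \<Rightarrow> real \<Rightarrow> real \<Rightarrow> real \<Rightarrow> nat \<Rightarrow> real \<Rightarrow> real \<Rightarrow> real" where
  "terminal_equity Ms12 Ms21 Md12 Md21 d1 d2 i a1 a2 =
     (let x = terminal_values Ms12 Ms21 Md12 Md21 d1 d2 a1 a2 in
      if i = 1 then fst x else fst (snd x))"

text \<open>Terminal external assets under Q, given current values a1, a2, time to maturity tau,
written via two independent standard normals z1, z2:
W_1 increment = sqrt tau * z1, W_2 increment = sqrt tau * (rho z1 + sqrt(1-rho^2) z2),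
so that d<W_1,W_2> = rho dt (explicit solution of the correlated GBM).\<close>
definition terminal_asset1 :: "real \<Rightarrow> real \<Rightarrow> real \<Rightarrow> real \<Rightarrow> real \<Rightarrow> real" where
  "terminal_asset1 r sig1 tau a1 z1 =
     a1 * exp ((r - sig1\<^sup>2 / 2) * tau + sig1 * sqrt tau * z1)"

definition terminal_asset2 ::
  "real \<Rightarrow> real \<Rightarrow> real \<Rightarrow> real \<Rightarrow> real \<Rightarrow> real \<Rightarrow> real \<Rightarrow> real" where
  "terminal_asset2 r sig2 rho tau a2 z1 z2 =
     a2 * exp ((r - sig2\<^sup>2 / 2) * tau + sig2 * sqrt tau * (rho * z1 + sqrt (1 - rho\<^sup>2) * z2))"

definition equity_price ::
  "real \<Rightarrow> real \<Rightarrow> real \<Rightarrow> real \<Rightarrow> real \<Rightarrow> real \<Rightarrow> real \<Rightarrow> real \<Rightarrow> real \<Rightarrow> real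
   \<Rightarrow> real \<Rightarrow> nat \<Rightarrow> real \<Rightarrow> real \<Rightarrow> real" where
  "equity_price Ms12 Ms21 Md12 Md21 d1 d2 r sig1 sig2 rho tau i a1 a2 =
     (LINT z|(lborel \<Otimes>\<^sub>M lborel).
        std_normal_density (fst z) * std_normal_density (snd z) *
        (exp (- r * tau) *
         terminal_equity Ms12 Ms21 Md12 Md21 d1 d2 i
           (terminal_asset1 r sig1 tau a1 (fst z))
           (terminal_asset2 r sig2 rho tau a2 (fst z) (snd z))))"

definition equity_delta ::
  "real \<Rightarrow> real \<Rightarrow> real \<Rightarrow> real \<Rightarrow> real \<Rightarrow> real \<Rightarrow> real \<Rightarrow> real \<Rightarrow> real \<Rightarrow> real
   \<Rightarrow> real \<Rightarrow> nat \<Rightarrow> nat \<Rightarrow> real \<Rightarrow> real \<Rightarrow> real" where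
  "equity_delta Ms12 Ms21 Md12 Md21 d1 d2 r sig1 sig2 rho tau i j a1 a2 =
     (if j = 1
      then deriv (\<lambda>u. equity_price Ms12 Ms21 Md12 Md21 d1 d2 r sig1 sig2 rho tau i u a2) a1
      else deriv (\<lambda>u. equity_price Ms12 Ms21 Md12 Md21 d1 d2 r sig1 sig2 rho tau i a1 u) a2)"

definition asset_cov :: "real \<Rightarrow> real \<Rightarrow> real \<Rightarrow> nat \<Rightarrow> nat \<Rightarrow> real" where
  "asset_cov sig1 sig2 rho k l =
     (if k = 1 \<and> l = 1 then sig1\<^sup>2
      else if k = 2 \<and> l = 2 then sig2\<^sup>2
      else rho * sig1 * sig2)"

text \<open>Entry (i,j) of Sigma^s = diag(s)^{-1} Delta diag(a) Sigma diag(a) Delta^T diag(s)^{-1}.\<close>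
definition equity_cov ::
  "real \<Rightarrow> real \<Rightarrow> real \<Rightarrow> real \<Rightarrow> real \<Rightarrow> real \<Rightarrow> real \<Rightarrow> real \<Rightarrow> real \<Rightarrow> real
   \<Rightarrow> real \<Rightarrow> nat \<Rightarrow> nat \<Rightarrow> real \<Rightarrow> real \<Rightarrow> real" where
  "equity_cov Ms12 Ms21 Md12 Md21 d1 d2 r sig1 sig2 rho tau i j a1 a2 =
     (let s = (\<lambda>m. equity_price Ms12 Ms21 Md12 Md21 d1 d2 r sig1 sig2 rho tau m a1 a2);
          D = (\<lambda>m k. equity_delta Ms12 Ms21 Md12 Md21 d1 d2 r sig1 sig2 rho tau m k a1 a2);
          a = (\<lambda>k::nat. if k = 1 then a1 else a2)
      in \<Sum>k\<in>{1::nat,2}. \<Sum>l\<in>{1::nat,2}.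
           (inverse (s i) * D i k * a k) * asset_cov sig1 sig2 rho k l *
           (a l * D j l * inverse (s j)))"

definition equity_corr ::
  "real \<Rightarrow> real \<Rightarrow> real \<Rightarrow> real \<Rightarrow> real \<Rightarrow> real \<Rightarrow> real \<Rightarrow> real \<Rightarrow> real \<Rightarrow> real
   \<Rightarrow> real \<Rightarrow> real \<Rightarrow> real \<Rightarrow> real" where
  "equity_corr Ms12 Ms21 Md12 Md21 d1 d2 r sig1 sig2 rho tau a1 a2 =
     equity_cov Ms12 Ms21 Md12 Md21 d1 d2 r sig1 sig2 rho tau 1 2 a1 a2 /
     sqrt (equity_cov Ms12 Ms21 Md12 Md21 d1 d2 r sig1 sig2 rho tau 1 1 a1 a2 *
           equity_cov Ms12 Ms21 Md12 Md21 d1 d2 r sig1 sig2 rho tau 2 2 a1 a2)"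

end

theory Submission
  imports Defs
begin

definition Rf :: "real \<Rightarrow> real \<Rightarrow> real \<Rightarrow> real \<Rightarrow> real \<Rightarrow> real \<Rightarrow> real" where
  "Rf M N d e x y = min d (min (x + M*e) ((x + M*y)/(1 - M*N)))"

definition Sf :: "real \<Rightarrow> real \<Rightarrow> real \<Rightarrow> real \<Rightarrow> real \<Rightarrow> real \<Rightarrow> real" where
  "Sf M N d e x y = max 0 (x + M * Rf N M e d y x - d)"

lemma prod_lt1: "0 \<le> (M::real) \<Longrightarrow> M < 1 \<Longrightarrow> 0 \<le> N \<Longrightarrow> N < 1 \<Longrightarrow> M*N < 1"
proof -
  assume a: "0 \<le> M" "M < 1" "0 \<le> N" "N < 1"
  have "M*N \<le> M" using a by (simp add: mult_left_le)
  thus ?thesis using a by simp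
qed

lemma min_key:
  fixes b D m d :: real
  assumes "0 \<le> m" "D = 1 - m" "m < 1"
  shows "min d (min (b + m*d) (b/D)) = min d (b/D)"
proof (cases "b \<le> D*d")
  case True
  have D: "D > 0" using assms by simp
  have "b/D \<le> d" using True D by (simp add: divide_le_eq mult.commute)
  moreover have "b/D \<le> b + m*d"
  proof -
    have "m*b \<le> m*(D*d)" using True assms(1) by (rule mult_left_mono)
    moreover have "D*(b + m*d) = b + (m*(D*d) - m*b)" unfolding assms(2) by (simp add: algebra_simps)
    ultimately have "b \<le> D*(b + m*d)" by linarith
    thus ?thesis using D by (simp add: divide_le_eq mult.commute)
  qed
  ultimately show ?thesis by simp
next
  case False
  have D: "D > 0" using assms by simp
  have "d < b/D" using False D by (simp add: less_divide_eq mult.commute)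
  moreover have "d < b + m*d" using False assms(2) by (simp add: algebra_simps)
  ultimately show ?thesis by simp
qed

lemma Rf_fix:
  assumes "0 \<le> M" "M < 1" "0 \<le> N" "N < 1"
  shows "Rf M N d e x y = min d (x + M * Rf N M e d y x)"
proof -
  define m where "m = M*N"
  have m0: "0 \<le> m" and m1: "m < 1" unfolding m_def using assms
    using prod_lt1[OF assms] by auto
  define D where "D = 1 - m"
  have D: "D > 0" using m1 D_def by simp
  define b where "b = x + M*y"
  have NM: "1 - N*M = D" unfolding D_def m_def by (simp add: mult.commute)
  have "M * Rf N M e d y x = min (M*e) (min (M*(y + N*d)) (M*((y + N*x)/D)))"
    unfolding Rf_def NM using assms(1) by (simp add: min_mult_distrib_left)
  moreover have "x + M*((y + N*x)/D) = b/D"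
    using D unfolding b_def D_def m_def by (simp add: field_simps)
  moreover have "x + M*(y + N*d) = b + m*d" unfolding b_def m_def by (simp add: algebra_simps)
  ultimately have "x + M * Rf N M e d y x = min (x + M*e) (min (b + m*d) (b/D))"
    by (simp add: min_add_distrib_left)
  hence "min d (x + M * Rf N M e d y x) = min (x + M*e) (min d (min (b + m*d) (b/D)))"
    by (simp add: min.assoc min.left_commute)
  also have "\<dots> = min (x + M*e) (min d (b/D))"
    using min_key[OF m0 D_def m1] by simp
  also have "\<dots> = Rf M N d e x y"
    unfolding Rf_def b_def D_def m_def by (simp add: min.left_commute)
  finally show ?thesis by simp
qed

lemma min_lip: "\<bar>min (a::real) b - min a c\<bar> \<le> \<bar>b - c\<bar>"
  by (simp add: min_def abs_if)

lemma terminal_values_explicit: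
  assumes "0 \<le> M12" "M12 < 1" "0 \<le> M21" "M21 < 1"
  shows "terminal_values 0 0 M12 M21 d1 d2 A1 A2 =
     (Sf M12 M21 d1 d2 A1 A2, Sf M21 M12 d2 d1 A2 A1, Rf M12 M21 d1 d2 A1 A2, Rf M21 M12 d2 d1 A2 A1)"
  unfolding terminal_values_def
proof (rule the_equality)
  show "is_clearing 0 0 M12 M21 d1 d2 A1 A2
     (Sf M12 M21 d1 d2 A1 A2, Sf M21 M12 d2 d1 A2 A1, Rf M12 M21 d1 d2 A1 A2, Rf M21 M12 d2 d1 A2 A1)"
  proof -
    have f1: "Rf M12 M21 d1 d2 A1 A2 = min d1 (A1 + M12 * Rf M21 M12 d2 d1 A2 A1)" by (rule Rf_fix[OF assms])
    have f2: "Rf M21 M12 d2 d1 A2 A1 = min d2 (A2 + M21 * Rf M12 M21 d1 d2 A1 A2)" by (rule Rf_fix[OF assms(3,4,1,2)])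
    show ?thesis unfolding is_clearing_def Sf_def by (simp add: f1[symmetric] f2[symmetric])
  qed
next
  fix x assume c: "is_clearing 0 0 M12 M21 d1 d2 A1 A2 x"
  obtain s1 s2 r1 r2 where x: "x = (s1, s2, r1, r2)" by (cases x) auto
  define R1 where "R1 = Rf M12 M21 d1 d2 A1 A2"
  define R2 where "R2 = Rf M21 M12 d2 d1 A2 A1"
  have e: "s1 = max 0 (A1 + M12 * r2 - d1)" "s2 = max 0 (A2 + M21 * r1 - d2)"
          "r1 = min d1 (A1 + M12 * r2)" "r2 = min d2 (A2 + M21 * r1)"
  proof -
    have e0: "s1 = max 0 (A1 + 0 * s2 + M12 * r2 - d1) \<and> s2 = max 0 (A2 + 0 * s1 + M21 * r1 - d2) \<and>
      r1 = min d1 (A1 + 0 * s2 + M12 * r2) \<and> r2 = min d2 (A2 + 0 * s1 + M21 * r1)"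
      using c unfolding x is_clearing_def prod.case .
    show "s1 = max 0 (A1 + M12 * r2 - d1)" using conjunct1[OF e0] by simp
    show "s2 = max 0 (A2 + M21 * r1 - d2)" using conjunct1[OF conjunct2[OF e0]] by simp
    show "r1 = min d1 (A1 + M12 * r2)" using conjunct1[OF conjunct2[OF conjunct2[OF e0]]] by simp
    show "r2 = min d2 (A2 + M21 * r1)" using conjunct2[OF conjunct2[OF conjunct2[OF e0]]] by simp
  qed
  have E: "R1 = min d1 (A1 + M12 * R2)" "R2 = min d2 (A2 + M21 * R1)"
    unfolding R1_def R2_def by (rule Rf_fix[OF assms], rule Rf_fix[OF assms(3,4,1,2)])
  have h1: "\<bar>r1 - R1\<bar> \<le> M12 * \<bar>r2 - R2\<bar>"
    using min_lip[of d1 "A1 + M12 * r2" "A1 + M12 * R2"] e(3) E(1) assms(1)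
    by (simp add: right_diff_distrib[symmetric] abs_mult)
  have h2: "\<bar>r2 - R2\<bar> \<le> M21 * \<bar>r1 - R1\<bar>"
    using min_lip[of d2 "A2 + M21 * r1" "A2 + M21 * R1"] e(4) E(2) assms(3)
    by (simp add: right_diff_distrib[symmetric] abs_mult)
  have "\<bar>r1 - R1\<bar> \<le> (M12*M21) * \<bar>r1 - R1\<bar>"
    using h1 mult_left_mono[OF h2 assms(1)] by (simp add: mult.assoc)
  moreover have "M12*M21 < 1" using prod_lt1[OF assms] .
  ultimately have "(1 - M12*M21) * \<bar>r1 - R1\<bar> \<le> 0" "0 < 1 - M12*M21"
    by (simp_all add: algebra_simps)
  hence "\<bar>r1 - R1\<bar> = 0"
    by (metis abs_ge_zero mult_le_0_iff not_less order_antisym)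
  hence r1: "r1 = R1" by simp
  with e(4) E(2) have r2: "r2 = R2" by simp
  show "x = (Sf M12 M21 d1 d2 A1 A2, Sf M21 M12 d2 d1 A2 A1, Rf M12 M21 d1 d2 A1 A2, Rf M21 M12 d2 d1 A2 A1)"
    unfolding x Sf_def using e(1,2) r1 r2 unfolding R1_def R2_def by simp
qed

lemma terminal_equity_explicit:
  assumes "0 \<le> M12" "M12 < 1" "0 \<le> M21" "M21 < 1"
  shows "terminal_equity 0 0 M12 M21 d1 d2 1 A1 A2 = Sf M12 M21 d1 d2 A1 A2"
    "terminal_equity 0 0 M12 M21 d1 d2 2 A1 A2 = Sf M21 M12 d2 d1 A2 A1"
  unfolding terminal_equity_def terminal_values_explicit[OF assms] by simp_all


lemma den_pos: "0 \<le> (M::real) \<Longrightarrow> M < 1 \<Longrightarrow> 0 \<le> N \<Longrightarrow> N < 1 \<Longrightarrow> 0 < 1 - M*N \<and> 1 - M*N \<le> 1"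
  using prod_lt1[of M N] by (simp add: mult_nonneg_nonneg)

lemma Rf_bounds:
  assumes "0 \<le> M" "M < 1" "0 \<le> N" "N < 1" "0 < d" "0 \<le> x" "0 \<le> y" "0 \<le> e"
  shows "0 \<le> Rf M N d e x y" "Rf M N d e x y \<le> d"
proof -
  have D: "0 < 1 - M*N" using den_pos[OF assms(1-4)] by simp
  have "0 \<le> (x + M*y)/(1 - M*N)" using D assms by simp
  moreover have "0 \<le> x + M*e" using assms by simp
  ultimately show "0 \<le> Rf M N d e x y" "Rf M N d e x y \<le> d" unfolding Rf_def using assms by auto
qed

lemma Rf_mono_other:
  assumes "0 \<le> M" "M < 1" "0 \<le> N" "N < 1" "y \<le> y'"
  shows "Rf M N d e x y \<le> Rf M N d e x y'"
proof -
  have D: "0 < 1 - M*N" using den_pos[OF assms(1-4)] by simp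
  have "M*y \<le> M*y'" using assms by (simp add: mult_left_mono)
  hence "(x + M*y)/(1 - M*N) \<le> (x + M*y')/(1 - M*N)" using D by (simp add: divide_right_mono)
  thus ?thesis unfolding Rf_def by (intro min.mono) auto
qed

lemma min_lip2: "\<bar>min (a::real) b - min a' b'\<bar> \<le> max \<bar>a - a'\<bar> \<bar>b - b'\<bar>"
  by (simp add: min_def max_def abs_if)

lemma Rf_lip_own:
  assumes "0 \<le> M" "M < 1" "0 \<le> N" "N < 1"
  shows "\<bar>Rf M N d e x y - Rf M N d e x' y\<bar> \<le> \<bar>x - x'\<bar> / (1 - M*N)"
proof -
  have D: "0 < 1 - M*N" "1 - M*N \<le> 1" using den_pos[OF assms(1-4)] by simp_all
  have a: "\<bar>(x + M*y)/(1 - M*N) - (x' + M*y)/(1 - M*N)\<bar> = \<bar>x - x'\<bar> / (1 - M*N)"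
    using D by (simp add: diff_divide_distrib[symmetric])
  have b: "\<bar>x - x'\<bar> \<le> \<bar>x - x'\<bar> / (1 - M*N)"
    using D by (simp add: le_divide_eq mult_left_le)
  have "\<bar>min (x + M*e) ((x + M*y)/(1 - M*N)) - min (x' + M*e) ((x' + M*y)/(1 - M*N))\<bar> \<le> \<bar>x - x'\<bar> / (1 - M*N)"
    using min_lip2[of "x + M*e" "(x + M*y)/(1 - M*N)" "x' + M*e" "(x' + M*y)/(1 - M*N)"] a b
    by simp
  moreover have "\<bar>Rf M N d e x y - Rf M N d e x' y\<bar> \<le> \<bar>min (x + M*e) ((x + M*y)/(1 - M*N)) - min (x' + M*e) ((x' + M*y)/(1 - M*N))\<bar>"
    unfolding Rf_def using min_lip[of d] by blast
  ultimately show ?thesis by linarith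
qed

lemma Rf_sat:
  assumes "0 \<le> M" "M < 1" "0 \<le> N" "N < 1" "d \<le> x" "0 \<le> y" "0 \<le> e" "0 < d"
  shows "Rf M N d e x y = d"
proof -
  have D: "0 < 1 - M*N" "1 - M*N \<le> 1" using den_pos[OF assms(1-4)] by simp_all
  have "x + M*y \<le> (x + M*y)/(1 - M*N)" using D assms by (simp add: le_divide_eq mult_left_le)
  moreover have "x \<le> x + M*y" "x \<le> x + M*e" using assms by simp_all
  ultimately have a: "d \<le> (x + M*y)/(1 - M*N)" "d \<le> x + M*e" using assms by linarith+
  show ?thesis unfolding Rf_def using a by (simp add: min_def)
qed

lemma Sf_bounds:
  assumes "0 \<le> M" "M < 1" "0 \<le> N" "N < 1" "0 < d" "0 < e" "0 \<le> x" "0 \<le> y"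
  shows "0 \<le> Sf M N d e x y" "Sf M N d e x y \<le> x + e" "x - d \<le> Sf M N d e x y"
proof -
  have R: "0 \<le> Rf N M e d y x" "Rf N M e d y x \<le> e"
    using Rf_bounds[of N M e y x d] assms by simp_all
  have "M * Rf N M e d y x \<le> Rf N M e d y x" using R(1) assms by (simp add: mult_left_le_one_le)
  hence "M * Rf N M e d y x \<le> e" using R(2) by linarith
  moreover have "0 \<le> M * Rf N M e d y x" using R assms by simp
  ultimately show "0 \<le> Sf M N d e x y" "Sf M N d e x y \<le> x + e" "x - d \<le> Sf M N d e x y"
    unfolding Sf_def using assms by auto
qed

lemma Sf_mono_own:
  assumes "0 \<le> M" "M < 1" "0 \<le> N" "N < 1" "0 < d" "0 < e" "0 \<le> x" "0 \<le> y" "x \<le> x'"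
  shows "Sf M N d e x y \<le> Sf M N d e x' y"
    "d \<le> x \<Longrightarrow> x' - x \<le> Sf M N d e x' y - Sf M N d e x y"
proof -
  have R: "Rf N M e d y x \<le> Rf N M e d y x'" using Rf_mono_other[OF assms(3,4,1,2,9)] .
  hence R': "M * Rf N M e d y x \<le> M * Rf N M e d y x'" using assms by (simp add: mult_left_mono)
  thus "Sf M N d e x y \<le> Sf M N d e x' y" unfolding Sf_def using assms by auto
  assume h: "d \<le> x"
  have "0 \<le> Rf N M e d y x" using Rf_bounds[of N M e y x d] assms by simp
  hence "0 \<le> M * Rf N M e d y x" using assms by simp
  thus "x' - x \<le> Sf M N d e x' y - Sf M N d e x y" unfolding Sf_def using R' h assms by auto
qed

lemma Sf_lip_other:
  assumes "0 \<le> M" "M < 1" "0 \<le> N" "N < 1"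
  shows "\<bar>Sf M N d e x y - Sf M N d e x y'\<bar> \<le> M / (1 - N*M) * \<bar>y - y'\<bar>"
proof -
  have l: "\<bar>Rf N M e d y x - Rf N M e d y' x\<bar> \<le> \<bar>y - y'\<bar> / (1 - N*M)"
    using Rf_lip_own[OF assms(3,4,1,2)] .
  have "\<bar>M * Rf N M e d y x - M * Rf N M e d y' x\<bar> = M * \<bar>Rf N M e d y x - Rf N M e d y' x\<bar>"
    using assms by (simp add: right_diff_distrib[symmetric] abs_mult)
  also have "\<dots> \<le> M * (\<bar>y - y'\<bar> / (1 - N*M))" by (rule mult_left_mono[OF l assms(1)])
  finally have "\<bar>M * Rf N M e d y x - M * Rf N M e d y' x\<bar> \<le> M / (1 - N*M) * \<bar>y - y'\<bar>" by simp
  moreover have "\<bar>max 0 (x + M * Rf N M e d y x - d) - max 0 (x + M * Rf N M e d y' x - d)\<bar>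
      \<le> \<bar>M * Rf N M e d y x - M * Rf N M e d y' x\<bar>" by (simp add: max_def abs_if)
  ultimately show ?thesis unfolding Sf_def by linarith
qed

lemma Sf_sat_other:
  assumes "0 \<le> M" "M < 1" "0 \<le> N" "N < 1" "0 < d" "0 < e" "0 \<le> x" "e \<le> y" "e \<le> y'"
  shows "Sf M N d e x y = Sf M N d e x y'"
  unfolding Sf_def using Rf_sat[OF assms(3,4,1,2,8,7), of d] Rf_sat[OF assms(3,4,1,2,9,7), of d] assms
  by simp


abbreviation "MM \<equiv> (lborel \<Otimes>\<^sub>M lborel :: (real \<times> real) measure)"

lemma integrable_prod_fun:
  fixes f g :: "real \<Rightarrow> real"
  assumes f: "integrable lborel f" and g: "integrable lborel g"
  shows "integrable MM (\<lambda>z. f (fst z) * g (snd z))"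
    "(\<integral>z. f (fst z) * g (snd z) \<partial>MM) = (\<integral>x. f x \<partial>lborel) * (\<integral>y. g y \<partial>lborel)"
proof -
  have fm[measurable]: "f \<in> borel_measurable lborel" using f by auto
  have gm[measurable]: "g \<in> borel_measurable lborel" using g by auto
  have "(\<integral>\<^sup>+ z. ennreal (norm (f (fst z) * g (snd z))) \<partial>MM)
        = (\<integral>\<^sup>+ x. \<integral>\<^sup>+ y. ennreal (norm (f x)) * ennreal (norm (g y)) \<partial>lborel \<partial>lborel)"
    by (subst lborel.nn_integral_fst[symmetric]) (auto simp: abs_mult ennreal_mult)
  also have "\<dots> = (\<integral>\<^sup>+ x. ennreal (norm (f x)) \<partial>lborel) * (\<integral>\<^sup>+ y. ennreal (norm (g y)) \<partial>lborel)"
    by (simp add: nn_integral_cmult nn_integral_multc)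
  also have "\<dots> < \<infinity>" using f g
    by (simp add: integrable_iff_bounded ennreal_mult_less_top)
  finally show int: "integrable MM (\<lambda>z. f (fst z) * g (snd z))"
    by (intro integrableI_bounded) auto
  have "(\<integral>z. f (fst z) * g (snd z) \<partial>MM) = (\<integral>x. \<integral>y. f x * g y \<partial>lborel \<partial>lborel)"
    using lborel_pair.integral_fst[of "\<lambda>x y. f x * g y"] int by (simp add: case_prod_beta')
  also have "\<dots> = (\<integral>x. f x \<partial>lborel) * (\<integral>y. g y \<partial>lborel)"
    by simp
  finally show "(\<integral>z. f (fst z) * g (snd z) \<partial>MM) = (\<integral>x. f x \<partial>lborel) * (\<integral>y. g y \<partial>lborel)" .
qed

lemma std_normal_integrable: "integrable lborel std_normal_density"
  by simp

lemma std_normal_integral: "(\<integral>x. std_normal_density x \<partial>lborel) = 1"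
  by simp

lemma psi_int: "integrable MM (\<lambda>z. std_normal_density (fst z) * std_normal_density (snd z))"
  and psi_integral: "(\<integral>z. std_normal_density (fst z) * std_normal_density (snd z) \<partial>MM) = 1"
  using integrable_prod_fun[OF std_normal_integrable std_normal_integrable] by simp_all

lemma shift_integral:
  fixes F :: "real \<times> real \<Rightarrow> real" and c :: "real \<times> real"
  assumes [measurable]: "F \<in> borel_measurable borel"
  shows "(\<integral>z. F z \<partial>MM) = (\<integral>w. F (c + w) \<partial>MM)"
proof -
  have "(\<integral>z. F z \<partial>MM) = (\<integral>z. F z \<partial>(distr lborel borel ((+) c)))"
    by (simp add: lborel_prod lborel_distr_plus)
  also have "\<dots> = (\<integral>w. F (c + w) \<partial>lborel)"
    by (rule integral_distr) auto
  finally show ?thesis by (simp add: lborel_prod)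
qed


lemma nd_eq:
  fixes x k :: real
  shows "exp (-(x\<^sup>2)/4 + k*x) = exp (k\<^sup>2) * sqrt (4*pi) * normal_density (2*k) (sqrt 2) x"
proof -
  have s: "sqrt (2 * pi * (sqrt 2)\<^sup>2) = sqrt (4*pi)" by simp
  have e: "-(x\<^sup>2)/4 + k*x = k\<^sup>2 + (-(x - 2*k)\<^sup>2 / (2 * (sqrt 2)\<^sup>2))"
    by (simp add: power2_eq_square field_simps)
  have "sqrt (4*pi) > 0" by simp
  then show ?thesis unfolding normal_density_def s e exp_add by simp
qed

lemma h_int:
  fixes k :: real assumes k: "0 \<le> k"
  shows "integrable lborel (\<lambda>x. (1 + \<bar>x\<bar>) * exp (-(x\<^sup>2)/4 + k*\<bar>x\<bar>))"
proof -
  define A where "A = exp (k\<^sup>2) * sqrt (4*pi) * (1 + 2*k)"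
  define G where "G = (\<lambda>x. A * (normal_density (2*k) (sqrt 2) x + normal_density (2*k) (sqrt 2) x * \<bar>x - 2*k\<bar>
                   + (normal_density (-(2*k)) (sqrt 2) x + normal_density (-(2*k)) (sqrt 2) x * \<bar>x + 2*k\<bar>)))"
  have i1: "integrable lborel (\<lambda>x. normal_density (2*k) (sqrt 2) x * \<bar>x - 2*k\<bar>)"
    using integrable_normal_moment_abs[where \<mu>="2*k" and \<sigma>="sqrt 2" and k=1] by simp
  have i2: "integrable lborel (\<lambda>x. normal_density (-(2*k)) (sqrt 2) x * \<bar>x + 2*k\<bar>)"
    using integrable_normal_moment_abs[where \<mu>="-(2*k)" and \<sigma>="sqrt 2" and k=1] by simp
  have i3: "integrable lborel (\<lambda>x. normal_density (2*k) (sqrt 2) x)" by simp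
  have i4: "integrable lborel (\<lambda>x. normal_density (-(2*k)) (sqrt 2) x)" by simp
  have Gi: "integrable lborel G" unfolding G_def
    using Bochner_Integration.integrable_mult_right[OF Bochner_Integration.integrable_add[OF Bochner_Integration.integrable_add[OF i3 i1] Bochner_Integration.integrable_add[OF i4 i2]], of A] .
  have bd: "norm ((1 + \<bar>x\<bar>) * exp (-(x\<^sup>2)/4 + k*\<bar>x\<bar>)) \<le> norm (G x)" for x :: real
  proof -
    have ep: "exp (-(x\<^sup>2)/4 + k*\<bar>x\<bar>) \<le> exp (-(x\<^sup>2)/4 + k*x) + exp (-(x\<^sup>2)/4 + (-k)*x)"
      by (cases "0 \<le> x") (simp_all add: add_increasing add_increasing2)
    have b1: "1 + \<bar>x\<bar> \<le> (1 + 2*k) * (1 + \<bar>x - 2*k\<bar>)"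
    proof -
      have "1 + \<bar>x\<bar> \<le> 1 + 2*k + \<bar>x - 2*k\<bar>" using k by linarith
      also have "\<dots> \<le> (1 + 2*k) * (1 + \<bar>x - 2*k\<bar>)" using k by (simp add: algebra_simps)
      finally show ?thesis .
    qed
    have b2: "1 + \<bar>x\<bar> \<le> (1 + 2*k) * (1 + \<bar>x - (-(2*k))\<bar>)"
    proof -
      have "1 + \<bar>x\<bar> \<le> 1 + 2*k + \<bar>x - (-(2*k))\<bar>" using k by linarith
      also have "\<dots> \<le> (1 + 2*k) * (1 + \<bar>x - (-(2*k))\<bar>)" using k by (simp add: algebra_simps)
      finally show ?thesis .
    qed
    have "(1 + \<bar>x\<bar>) * exp (-(x\<^sup>2)/4 + k*\<bar>x\<bar>)
        \<le> (1 + \<bar>x\<bar>) * exp (-(x\<^sup>2)/4 + k*x) + (1 + \<bar>x\<bar>) * exp (-(x\<^sup>2)/4 + (-k)*x)"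
      using mult_left_mono[OF ep, of "1 + \<bar>x\<bar>"] by (simp add: distrib_left)
    also have "\<dots> \<le> ((1 + 2*k) * (1 + \<bar>x - 2*k\<bar>)) * exp (-(x\<^sup>2)/4 + k*x)
                  + ((1 + 2*k) * (1 + \<bar>x - (-(2*k))\<bar>)) * exp (-(x\<^sup>2)/4 + (-k)*x)"
      by (intro add_mono mult_right_mono b1 b2) simp_all
    also have "\<dots> = G x"
      unfolding G_def A_def nd_eq[of x k] nd_eq[of x "-k"] by (simp add: algebra_simps)
    finally have "(1 + \<bar>x\<bar>) * exp (-(x\<^sup>2)/4 + k*\<bar>x\<bar>) \<le> G x" .
    moreover have "0 \<le> (1 + \<bar>x\<bar>) * exp (-(x\<^sup>2)/4 + k*\<bar>x\<bar>)" by simp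
    ultimately show ?thesis by simp
  qed
  show ?thesis
    by (rule Bochner_Integration.integrable_bound[OF Gi]) (measurable, rule AE_I2, rule bd)
qed

lemma phi_le: "std_normal_density y \<le> exp (-(y\<^sup>2)/2)"
proof -
  have "1 \<le> sqrt (2*pi)" using pi_gt3 by simp
  hence "1 / sqrt (2*pi) \<le> 1" by simp
  thus ?thesis unfolding std_normal_density_def
    using mult_right_mono[of "1 / sqrt (2*pi)" 1 "exp (-(y\<^sup>2)/2)"] by simp
qed

lemma phi_shift:
  fixes x c R :: real
  assumes "\<bar>c\<bar> \<le> R"
  shows "std_normal_density (x - c) \<le> exp (R\<^sup>2/2) * exp (-(x\<^sup>2)/4)"
proof -
  have "x\<^sup>2 \<le> 2*(x-c)\<^sup>2 + 2*c\<^sup>2"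
    using zero_le_power2[of "x - 2*c"] by (simp add: power2_eq_square algebra_simps)
  moreover have "c\<^sup>2 \<le> R\<^sup>2" using assms abs_le_square_iff[of c R] abs_ge_zero[of c]
    by (metis abs_le_square_iff abs_of_nonneg order_trans)
  ultimately have "-((x - c)\<^sup>2)/2 \<le> R\<^sup>2/2 + (-(x\<^sup>2)/4)" by linarith
  hence "exp (-((x - c)\<^sup>2)/2) \<le> exp (R\<^sup>2/2) * exp (-(x\<^sup>2)/4)" by (simp add: exp_add[symmetric])
  thus ?thesis using phi_le[of "x - c"] by simp
qed

lemma phi_shift2:
  fixes x c R :: real
  assumes "\<bar>c\<bar> \<le> R"
  shows "std_normal_density (x - c) \<le> exp (R\<^sup>2/2) * (R + 1) * (1 + \<bar>x\<bar>) * exp (-(x\<^sup>2)/4)"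
    "\<bar>x - c\<bar> * std_normal_density (x - c) \<le> exp (R\<^sup>2/2) * (R + 1) * (1 + \<bar>x\<bar>) * exp (-(x\<^sup>2)/4)"
proof -
  have R: "0 \<le> R" using assms by linarith
  have p: "std_normal_density (x - c) \<le> exp (R\<^sup>2/2) * exp (-(x\<^sup>2)/4)" by (rule phi_shift[OF assms])
  have one: "1 \<le> (R + 1) * (1 + \<bar>x\<bar>)" using R by (simp add: algebra_simps add_increasing)
  have two: "\<bar>x - c\<bar> \<le> (R + 1) * (1 + \<bar>x\<bar>)"
  proof -
    have "0 \<le> R * \<bar>x\<bar>" using R by simp
    moreover have "\<bar>x - c\<bar> \<le> \<bar>x\<bar> + \<bar>c\<bar>" by (rule abs_triangle_ineq4)
    moreover have "(R+1)*(1+\<bar>x\<bar>) = 1 + R + \<bar>x\<bar> + R*\<bar>x\<bar>" by (simp add: algebra_simps)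
    ultimately show ?thesis using assms by linarith
  qed
  have E: "0 \<le> exp (R\<^sup>2/2) * exp (-(x\<^sup>2)/4)" by simp
  show "std_normal_density (x - c) \<le> exp (R\<^sup>2/2) * (R + 1) * (1 + \<bar>x\<bar>) * exp (-(x\<^sup>2)/4)"
    using p mult_right_mono[OF one E] by (simp add: algebra_simps)
  have "\<bar>x - c\<bar> * std_normal_density (x - c) \<le> ((R + 1) * (1 + \<bar>x\<bar>)) * (exp (R\<^sup>2/2) * exp (-(x\<^sup>2)/4))"
    by (rule mult_mono[OF two p]) (simp_all add: R)
  thus "\<bar>x - c\<bar> * std_normal_density (x - c) \<le> exp (R\<^sup>2/2) * (R + 1) * (1 + \<bar>x\<bar>) * exp (-(x\<^sup>2)/4)"
    by (simp add: algebra_simps)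
qed


definition hh :: "real \<Rightarrow> real \<Rightarrow> real" where
  "hh k x = (1 + \<bar>x\<bar>) * exp (-(x\<^sup>2)/4 + k*\<bar>x\<bar>)"

lemma hh_nonneg: "0 \<le> hh k x" unfolding hh_def by simp

lemma maj_int: "0 \<le> k \<Longrightarrow> integrable (lborel :: (real \<times> real) measure) (\<lambda>w. hh k (fst w) * hh k (snd w))"
  using integrable_prod_fun(1)[OF h_int h_int, of k k] unfolding hh_def lborel_prod by simp

lemma dphi: "((\<lambda>u. std_normal_density (a - p*u)) has_real_derivative (p*(a - p*u) * std_normal_density (a - p*u))) (at u)"
proof -
  have e: "((\<lambda>u. -((a - p*u)\<^sup>2)/2) has_real_derivative p*(a - p*u)) (at u)"
    by (auto intro!: derivative_eq_intros simp: power2_eq_square field_simps)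
  have "((\<lambda>u. (1 / sqrt (2*pi)) * exp (-((a - p*u)\<^sup>2)/2)) has_real_derivative
          (1 / sqrt (2*pi)) * (exp (-((a - p*u)\<^sup>2)/2) * (p*(a - p*u)))) (at u)"
    by (rule DERIV_cmult[OF DERIV_fun_exp[OF e]])
  thus ?thesis unfolding std_normal_density_def
    by (rule DERIV_cong) (simp only: mult_ac)
qed

lemma hh_alt: "hh k x = (1 + \<bar>x\<bar>) * exp (-(x\<^sup>2)/4) * exp (k*\<bar>x\<bar>)"
  unfolding hh_def by (simp only: exp_add mult.assoc)

lemma abs_bound:
  fixes f1 f2 B1 B2 d1 d2 p q f Kf :: real
  assumes "0 \<le> f1" "f1 \<le> B1" "0 \<le> f2" "f2 \<le> B2" "\<bar>d1\<bar> * f1 \<le> B1" "\<bar>d2\<bar> * f2 \<le> B2" "\<bar>f\<bar> \<le> Kf"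
  shows "\<bar>f1 * f2 * (p*d1 + q*d2) * f\<bar> \<le> (\<bar>p\<bar> + \<bar>q\<bar> + 1) * B1 * B2 * Kf"
    "\<bar>f1 * f2 * f\<bar> \<le> (\<bar>p\<bar> + \<bar>q\<bar> + 1) * B1 * B2 * Kf"
proof -
  have B1: "0 \<le> B1" "0 \<le> B2" "0 \<le> Kf" using assms by linarith+
  have a: "\<bar>p*d1 + q*d2\<bar> \<le> \<bar>p\<bar>*\<bar>d1\<bar> + \<bar>q\<bar>*\<bar>d2\<bar>"
    by (metis abs_mult abs_triangle_ineq)
  have "\<bar>f1 * f2 * (p*d1 + q*d2)\<bar> = f1 * f2 * \<bar>p*d1 + q*d2\<bar>" using assms by (simp add: abs_mult)
  also have "\<dots> \<le> f1 * f2 * (\<bar>p\<bar>*\<bar>d1\<bar> + \<bar>q\<bar>*\<bar>d2\<bar>)"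
    using a assms by (simp add: mult_left_mono)
  also have "\<dots> = \<bar>p\<bar> * ((\<bar>d1\<bar> * f1) * f2) + \<bar>q\<bar> * (f1 * (\<bar>d2\<bar> * f2))" by (simp add: algebra_simps)
  also have "\<dots> \<le> \<bar>p\<bar> * (B1 * B2) + \<bar>q\<bar> * (B1 * B2)"
    by (intro add_mono mult_left_mono mult_mono assms B1) (simp_all add: assms)
  also have "\<dots> \<le> (\<bar>p\<bar> + \<bar>q\<bar> + 1) * B1 * B2"
    using B1 by (simp add: algebra_simps)
  finally have x: "\<bar>f1 * f2 * (p*d1 + q*d2)\<bar> \<le> (\<bar>p\<bar> + \<bar>q\<bar> + 1) * B1 * B2" .
  show "\<bar>f1 * f2 * (p*d1 + q*d2) * f\<bar> \<le> (\<bar>p\<bar> + \<bar>q\<bar> + 1) * B1 * B2 * Kf"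
    unfolding abs_mult[of _ f] by (rule mult_mono[OF x assms(7)]) (simp_all add: B1 assms)
  have "\<bar>f1 * f2\<bar> \<le> B1 * B2" using assms by (simp add: abs_mult mult_mono)
  also have "\<dots> \<le> (\<bar>p\<bar> + \<bar>q\<bar> + 1) * B1 * B2" using B1 by (simp add: algebra_simps)
  finally have y: "\<bar>f1 * f2\<bar> \<le> (\<bar>p\<bar> + \<bar>q\<bar> + 1) * B1 * B2" .
  show "\<bar>f1 * f2 * f\<bar> \<le> (\<bar>p\<bar> + \<bar>q\<bar> + 1) * B1 * B2 * Kf"
    unfolding abs_mult[of _ f] by (rule mult_mono[OF y assms(7)]) (simp_all add: B1)
qed

lemma g_bounds:
  fixes F :: "real \<times> real \<Rightarrow> real" and p q K k T u :: real and w :: "real \<times> real"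
  assumes Fb: "\<bar>F w\<bar> \<le> K * exp (k * (\<bar>fst w\<bar> + \<bar>snd w\<bar>))" and u: "\<bar>u\<bar> \<le> T"
  defines "R \<equiv> (\<bar>p\<bar> + \<bar>q\<bar>) * T"
  defines "C \<equiv> (\<bar>p\<bar> + \<bar>q\<bar> + 1) * (exp (R\<^sup>2/2) * (R + 1))\<^sup>2 * K"
  shows "\<bar>std_normal_density (fst w - p*u) * std_normal_density (snd w - q*u) *
            (p*(fst w - p*u) + q*(snd w - q*u)) * F w\<bar> \<le> C * (hh k (fst w) * hh k (snd w))"
    "\<bar>std_normal_density (fst w - p*u) * std_normal_density (snd w - q*u) * F w\<bar> \<le> C * (hh k (fst w) * hh k (snd w))"
proof -
  have pu: "\<bar>p*u\<bar> \<le> R" "\<bar>q*u\<bar> \<le> R"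
  proof -
    have "\<bar>p*u\<bar> \<le> \<bar>p\<bar>*T" "\<bar>q*u\<bar> \<le> \<bar>q\<bar>*T" using u by (simp_all add: abs_mult mult_left_mono)
    moreover have "\<bar>p\<bar>*T \<le> R" "\<bar>q\<bar>*T \<le> R" unfolding R_def using u
      by (simp_all add: algebra_simps)
    ultimately show "\<bar>p*u\<bar> \<le> R" "\<bar>q*u\<bar> \<le> R" by linarith+
  qed
  define B1 where "B1 = exp (R\<^sup>2/2) * (R + 1) * (1 + \<bar>fst w\<bar>) * exp (-((fst w)\<^sup>2)/4)"
  define B2 where "B2 = exp (R\<^sup>2/2) * (R + 1) * (1 + \<bar>snd w\<bar>) * exp (-((snd w)\<^sup>2)/4)"
  note s1 = phi_shift2[OF pu(1), of "fst w", folded B1_def]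
  note s2 = phi_shift2[OF pu(2), of "snd w", folded B2_def]
  have Fb': "\<bar>F w\<bar> \<le> K * exp (k*\<bar>fst w\<bar>) * exp (k*\<bar>snd w\<bar>)"
    using Fb by (simp add: distrib_left exp_add mult.assoc)
  have eq: "(\<bar>p\<bar> + \<bar>q\<bar> + 1) * B1 * B2 * (K * exp (k*\<bar>fst w\<bar>) * exp (k*\<bar>snd w\<bar>)) = C * (hh k (fst w) * hh k (snd w))"
    unfolding B1_def B2_def C_def hh_alt power2_eq_square[of "exp (R\<^sup>2/2) * (R + 1)"] by (simp only: mult_ac)
  show "\<bar>std_normal_density (fst w - p*u) * std_normal_density (snd w - q*u) *
            (p*(fst w - p*u) + q*(snd w - q*u)) * F w\<bar> \<le> C * (hh k (fst w) * hh k (snd w))"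
    using abs_bound(1)[OF _ s1(1) _ s2(1) s1(2) s2(2) Fb', of p q] eq by simp
  show "\<bar>std_normal_density (fst w - p*u) * std_normal_density (snd w - q*u) * F w\<bar> \<le> C * (hh k (fst w) * hh k (snd w))"
    using abs_bound(2)[OF _ s1(1) _ s2(1) s1(2) s2(2) Fb', of p q] eq by simp
qed


lemma g_int:
  fixes F :: "real \<times> real \<Rightarrow> real" and p q K k t :: real
  assumes Fm[measurable]: "F \<in> borel_measurable borel"
    and Fb: "\<And>w. \<bar>F w\<bar> \<le> K * exp (k * (\<bar>fst w\<bar> + \<bar>snd w\<bar>))" and k: "0 \<le> k"
  shows "integrable lborel (\<lambda>w. std_normal_density (fst w - p*t) * std_normal_density (snd w - q*t) * F w)"
proof -
  have Fm'[measurable]: "F \<in> borel_measurable (borel \<Otimes>\<^sub>M borel)" using Fm by (simp add: borel_prod)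
  define R where "R = (\<bar>p\<bar> + \<bar>q\<bar>) * \<bar>t\<bar>"
  define C where "C = (\<bar>p\<bar> + \<bar>q\<bar> + 1) * (exp (R\<^sup>2/2) * (R + 1))\<^sup>2 * K"
  have i: "integrable lborel (\<lambda>w. C * (hh k (fst w) * hh k (snd w)))"
    by (intro Bochner_Integration.integrable_mult_right maj_int k)
  show ?thesis
  proof (rule Bochner_Integration.integrable_bound[OF i])
    show "(\<lambda>w. std_normal_density (fst w - p*t) * std_normal_density (snd w - q*t) * F w) \<in> borel_measurable lborel"
      unfolding measurable_lborel2 borel_prod[symmetric] by measurable
    show "AE w in lborel. norm (std_normal_density (fst w - p*t) * std_normal_density (snd w - q*t) * F w)
        \<le> norm (C * (hh k (fst w) * hh k (snd w)))"
    proof (rule AE_I2)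
      fix w :: "real \<times> real"
      have "\<bar>std_normal_density (fst w - p*t) * std_normal_density (snd w - q*t) * F w\<bar> \<le> C * (hh k (fst w) * hh k (snd w))"
        using g_bounds(2)[where F=F and w=w and K=K and k=k and u=t and T="\<bar>t\<bar>" and p=p and q=q, OF Fb[of w]] unfolding R_def C_def by simp
      thus "norm (std_normal_density (fst w - p*t) * std_normal_density (snd w - q*t) * F w)
        \<le> norm (C * (hh k (fst w) * hh k (snd w)))" by simp
    qed
  qed
qed

lemma diff_lemma:
  fixes F :: "real \<times> real \<Rightarrow> real" and p q K k t :: real
  assumes Fm[measurable]: "F \<in> borel_measurable borel"
    and Fb: "\<And>w. \<bar>F w\<bar> \<le> K * exp (k * (\<bar>fst w\<bar> + \<bar>snd w\<bar>))" and k: "0 \<le> k"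
  shows "\<exists>D. ((\<lambda>t. \<integral>w. std_normal_density (fst w - p*t) * std_normal_density (snd w - q*t) * F w \<partial>lborel)
           has_real_derivative D) (at t)"
proof -
  have Fm'[measurable]: "F \<in> borel_measurable (borel \<Otimes>\<^sub>M borel)" using Fm by (simp add: borel_prod)
  define g where "g u w = std_normal_density (fst w - p*u) * std_normal_density (snd w - q*u) * F w" for u w
  define g' where "g' u w = std_normal_density (fst w - p*u) * std_normal_density (snd w - q*u) *
            (p*(fst w - p*u) + q*(snd w - q*u)) * F w" for u w
  define Q where "Q t = (\<integral>w. g t w \<partial>lborel)" for t
  have dg: "((\<lambda>u. g u w) has_real_derivative g' u w) (at u)" for u w
  proof -
    have "((\<lambda>u. std_normal_density (fst w - p*u) * std_normal_density (snd w - q*u) * F w) has_real_derivative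
       ((p*(fst w - p*u) * std_normal_density (fst w - p*u)) * std_normal_density (snd w - q*u)
        + (q*(snd w - q*u) * std_normal_density (snd w - q*u)) * std_normal_density (fst w - p*u)) * F w
       + 0 * (std_normal_density (fst w - p*u) * std_normal_density (snd w - q*u))) (at u)"
      by (intro DERIV_mult dphi DERIV_const)
    thus ?thesis unfolding g_def g'_def by (rule DERIV_cong) (simp add: algebra_simps)
  qed
  have gi: "integrable lborel (g u)" for u unfolding g_def by (rule g_int[OF Fm Fb k])
  have gm[measurable]: "g u \<in> borel_measurable lborel" for u using gi[of u] by auto
  have g'm[measurable]: "g' u \<in> borel_measurable lborel" for u unfolding g'_def measurable_lborel2 borel_prod[symmetric] by measurable
  have "((\<lambda>y. (Q y - Q t) / (y - t)) \<longlongrightarrow> (\<integral>w. g' t w \<partial>lborel)) (at t)"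
    unfolding tendsto_at_iff_sequentially
  proof (intro allI impI)
    fix X :: "nat \<Rightarrow> real" assume X: "\<forall>i. X i \<in> UNIV - {t}" and Xl: "X \<longlonglongrightarrow> t"
    obtain B where B: "0 < B" "\<And>n. norm (X n) \<le> B"
      using BseqE[OF convergent_imp_Bseq[OF convergentI[OF Xl]]] by metis
    define T where "T = max B \<bar>t\<bar>"
    define R where "R = (\<bar>p\<bar> + \<bar>q\<bar>) * T"
    define C where "C = (\<bar>p\<bar> + \<bar>q\<bar> + 1) * (exp (R\<^sup>2/2) * (R + 1))\<^sup>2 * K"
    define mj where "mj w = C * (hh k (fst w) * hh k (snd w))" for w
    have mji: "integrable lborel mj" unfolding mj_def
      by (intro Bochner_Integration.integrable_mult_right maj_int k)
    have bd': "\<bar>g' u w\<bar> \<le> mj w" if "\<bar>u\<bar> \<le> T" for u w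
      using g_bounds(1)[where F=F and w=w and K=K and k=k and u=u and T=T and p=p and q=q, OF Fb[of w] that] unfolding g'_def mj_def C_def R_def by simp
    have XT: "\<bar>X i\<bar> \<le> T" for i using B(2)[of i] unfolding T_def by simp
    have tT: "\<bar>t\<bar> \<le> T" unfolding T_def by simp
    have Xne: "X i \<noteq> t" for i using X by auto
    define s where "s i w = (g (X i) w - g t w) / (X i - t)" for i w
    have eqs: "(Q (X i) - Q t) / (X i - t) = (\<integral>w. s i w \<partial>lborel)" for i
      unfolding Q_def s_def using gi[of "X i"] gi[of t] by simp
    have "(\<lambda>i. \<integral>w. s i w \<partial>lborel) \<longlonglongrightarrow> (\<integral>w. g' t w \<partial>lborel)"
    proof (rule integral_dominated_convergence[where w = mj])
      show "g' t \<in> borel_measurable lborel" by (rule g'm)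
      show "\<And>i. s i \<in> borel_measurable lborel" unfolding s_def by (intro borel_measurable_divide borel_measurable_diff gm borel_measurable_const)
      show "integrable lborel mj" by (rule mji)
      show "AE w in lborel. (\<lambda>i. s i w) \<longlonglongrightarrow> g' t w"
      proof (rule AE_I2)
        fix w
        have "((\<lambda>y. (g y w - g t w) / (y - t)) \<longlongrightarrow> g' t w) (at t)"
          using dg[where u=t and w=w] unfolding has_field_derivative_iff .
        hence "((\<lambda>y. (g y w - g t w) / (y - t)) \<circ> X) \<longlonglongrightarrow> g' t w"
          unfolding tendsto_at_iff_sequentially using X Xl by blast
        thus "(\<lambda>i. s i w) \<longlonglongrightarrow> g' t w" unfolding s_def comp_def .
      qed
      show "AE w in lborel. norm (s i w) \<le> mj w" for i
      proof (rule AE_I2)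
        fix w
        have "norm (g (X i) w - g t w) \<le> mj w * norm (X i - t)"
        proof (rule field_differentiable_bound[where S = "{-T..T}" and f = "\<lambda>u. g u w" and f' = "\<lambda>u. g' u w"])
          show "convex {-T..T}" by simp
          show "((\<lambda>u. g u w) has_field_derivative g' z w) (at z within {-T..T})" for z
            using dg[where u=z and w=w] by (rule has_field_derivative_at_within)
          show "norm (g' z w) \<le> mj w" if "z \<in> {-T..T}" for z using bd'[where u=z and w=w] that by auto
          show "X i \<in> {-T..T}" using XT[of i] by auto
          show "t \<in> {-T..T}" using tT by auto
        qed
        thus "norm (s i w) \<le> mj w" unfolding s_def using Xne[of i]
          by (simp add: divide_le_eq abs_divide)
      qed
    qed
    thus "((\<lambda>y. (Q y - Q t) / (y - t)) \<circ> X) \<longlonglongrightarrow> (\<integral>w. g' t w \<partial>lborel)"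
      unfolding comp_def eqs .
  qed
  hence "(Q has_real_derivative (\<integral>w. g' t w \<partial>lborel)) (at t)"
    unfolding has_field_derivative_iff .
  thus ?thesis unfolding Q_def g_def by blast
qed


lemma shift_integral_lb:
  fixes F :: "real \<times> real \<Rightarrow> real" and c :: "real \<times> real"
  assumes "F \<in> borel_measurable borel"
  shows "(\<integral>z. F z \<partial>lborel) = (\<integral>w. F (c + w) \<partial>lborel)"
  using shift_integral[OF assms, of c] unfolding lborel_prod .

lemma s_props: "-1 < (rho::real) \<Longrightarrow> rho < 1 \<Longrightarrow> 0 < sqrt (1 - rho\<^sup>2) \<and> sqrt (1 - rho\<^sup>2) \<le> 1"
proof -
  assume a: "-1 < rho" "rho < 1"
  have "rho\<^sup>2 < 1" using a by (simp add: abs_square_less_1)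
  thus ?thesis by simp
qed

locale mdl =
  fixes Md12 Md21 d1 d2 r sig1 sig2 rho tau :: real
  assumes hM: "0 \<le> Md12" "Md12 < 1" "0 \<le> Md21" "Md21 < 1"
    and hd: "0 < d1" "0 < d2"
    and hs: "0 < sig1" "0 < sig2"
    and hr: "-1 < rho" "rho < 1"
    and ht: "0 < tau"
begin

abbreviation "TE i x y \<equiv> terminal_equity 0 0 Md12 Md21 d1 d2 i x y"
abbreviation "mu1 \<equiv> (r - sig1\<^sup>2 / 2) * tau"
abbreviation "mu2 \<equiv> (r - sig2\<^sup>2 / 2) * tau"
abbreviation "ka1 \<equiv> sig1 * sqrt tau"
abbreviation "ka2 \<equiv> sig2 * sqrt tau"
abbreviation "ss \<equiv> sqrt (1 - rho\<^sup>2)"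

lemma ka_pos: "0 < ka1" "0 < ka2" using hs ht by simp_all

lemma ss_props: "0 < ss" "ss \<le> 1" using s_props[OF hr] by simp_all

lemma TE_Sf: "TE 1 x y = Sf Md12 Md21 d1 d2 x y" "TE 2 x y = Sf Md21 Md12 d2 d1 y x"
  using terminal_equity_explicit[OF hM] by simp_all

lemma TE_meas:
  assumes "i = 1 \<or> i = 2" and [measurable]: "f \<in> borel_measurable M" "g \<in> borel_measurable M"
  shows "(\<lambda>z. TE i (f z) (g z)) \<in> borel_measurable M"
proof -
  have m1: "(\<lambda>z. TE 1 (f z) (g z)) \<in> borel_measurable M" unfolding TE_Sf Sf_def Rf_def by measurable
  have m2: "(\<lambda>z. TE 2 (f z) (g z)) \<in> borel_measurable M" unfolding TE_Sf Sf_def Rf_def by measurable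
  show ?thesis using assms(1) m1 m2 by auto
qed

lemma TE_bound:
  assumes "i = 1 \<or> i = 2" "0 \<le> x" "0 \<le> y"
  shows "0 \<le> TE i x y" "TE i x y \<le> x + y + d1 + d2"
proof -
  have "0 \<le> TE i x y \<and> TE i x y \<le> x + y + d1 + d2"
    using assms(1)
  proof
    assume "i = 1" thus ?thesis using Sf_bounds[OF hM hd assms(2,3)] assms TE_Sf hd by simp
  next
    assume "i = 2" thus ?thesis using Sf_bounds[OF hM(3,4,1,2) hd(2,1) assms(3,2)] assms TE_Sf hd by simp
  qed
  thus "0 \<le> TE i x y" "TE i x y \<le> x + y + d1 + d2" by simp_all
qed

definition Fa :: "real \<Rightarrow> real \<Rightarrow> nat \<Rightarrow> real \<times> real \<Rightarrow> real" where
  "Fa al1 al2 i w = exp (- r * tau) * TE i (al1 * exp (mu1 + ka1 * fst w))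
       (al2 * exp (mu2 + ka2 * (rho * fst w + ss * snd w)))"

lemma Fa_meas: "i = 1 \<or> i = 2 \<Longrightarrow> Fa al1 al2 i \<in> borel_measurable borel"
proof -
  assume i: "i = 1 \<or> i = 2"
  have "(\<lambda>w. TE i (al1 * exp (mu1 + ka1 * fst w)) (al2 * exp (mu2 + ka2 * (rho * fst w + ss * snd w))))
         \<in> borel_measurable (borel \<Otimes>\<^sub>M borel)"
    by (rule TE_meas[OF i]) measurable
  thus ?thesis unfolding Fa_def borel_prod by measurable
qed

lemma Fa_bound:
  assumes i: "i = 1 \<or> i = 2" and a: "0 < al1" "0 < al2"
  shows "\<bar>Fa al1 al2 i w\<bar> \<le> (exp (- r * tau) * (al1 * exp \<bar>mu1\<bar> + al2 * exp \<bar>mu2\<bar> + d1 + d2))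
            * exp ((ka1 + ka2) * (\<bar>fst w\<bar> + \<bar>snd w\<bar>))"
proof -
  define E where "E = exp ((ka1 + ka2) * (\<bar>fst w\<bar> + \<bar>snd w\<bar>))"
  have E1: "1 \<le> E" unfolding E_def using ka_pos by simp
  have k1: "mu1 + ka1 * fst w \<le> \<bar>mu1\<bar> + (ka1 + ka2) * (\<bar>fst w\<bar> + \<bar>snd w\<bar>)"
  proof -
    have "ka1 * fst w \<le> ka1 * \<bar>fst w\<bar>" using ka_pos by (simp add: mult_left_mono)
    moreover have "ka1 * \<bar>fst w\<bar> \<le> (ka1 + ka2) * (\<bar>fst w\<bar> + \<bar>snd w\<bar>)"
    proof -
      have "0 \<le> ka1 * \<bar>snd w\<bar>" "0 \<le> ka2 * (\<bar>fst w\<bar> + \<bar>snd w\<bar>)" using ka_pos by simp_all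
      moreover have "(ka1 + ka2) * (\<bar>fst w\<bar> + \<bar>snd w\<bar>) = ka1 * \<bar>fst w\<bar> + ka1 * \<bar>snd w\<bar> + ka2 * (\<bar>fst w\<bar> + \<bar>snd w\<bar>)"
        by (simp add: algebra_simps)
      ultimately show ?thesis by linarith
    qed
    ultimately show ?thesis by linarith
  qed
  have k2: "mu2 + ka2 * (rho * fst w + ss * snd w) \<le> \<bar>mu2\<bar> + (ka1 + ka2) * (\<bar>fst w\<bar> + \<bar>snd w\<bar>)"
  proof -
    have "rho * fst w \<le> \<bar>fst w\<bar>"
    proof -
      have "\<bar>rho\<bar> \<le> 1" using hr by simp
      hence "\<bar>rho\<bar> * \<bar>fst w\<bar> \<le> \<bar>fst w\<bar>" by (simp add: mult_left_le_one_le)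
      moreover have "rho * fst w \<le> \<bar>rho\<bar> * \<bar>fst w\<bar>" by (simp add: abs_mult[symmetric])
      ultimately show ?thesis by linarith
    qed
    moreover have "ss * snd w \<le> \<bar>snd w\<bar>"
    proof -
      have "ss * \<bar>snd w\<bar> \<le> \<bar>snd w\<bar>" using ss_props by (simp add: mult_left_le_one_le)
      moreover have "ss * snd w \<le> ss * \<bar>snd w\<bar>" using ss_props by (simp add: mult_left_mono)
      ultimately show ?thesis by linarith
    qed
    ultimately have "ka2 * (rho * fst w + ss * snd w) \<le> ka2 * (\<bar>fst w\<bar> + \<bar>snd w\<bar>)"
      using ka_pos by (intro mult_left_mono) simp_all
    moreover have "ka2 * (\<bar>fst w\<bar> + \<bar>snd w\<bar>) \<le> (ka1 + ka2) * (\<bar>fst w\<bar> + \<bar>snd w\<bar>)"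
      using ka_pos by (intro mult_right_mono) simp_all
    ultimately show ?thesis by linarith
  qed
  have A1: "al1 * exp (mu1 + ka1 * fst w) \<le> al1 * exp \<bar>mu1\<bar> * E"
    using k1 a unfolding E_def by (simp add: exp_add[symmetric])
  have A2: "al2 * exp (mu2 + ka2 * (rho * fst w + ss * snd w)) \<le> al2 * exp \<bar>mu2\<bar> * E"
    using k2 a unfolding E_def by (simp add: exp_add[symmetric])
  have tb: "0 \<le> TE i (al1 * exp (mu1 + ka1 * fst w)) (al2 * exp (mu2 + ka2 * (rho * fst w + ss * snd w)))"
    "TE i (al1 * exp (mu1 + ka1 * fst w)) (al2 * exp (mu2 + ka2 * (rho * fst w + ss * snd w)))
      \<le> al1 * exp (mu1 + ka1 * fst w) + al2 * exp (mu2 + ka2 * (rho * fst w + ss * snd w)) + d1 + d2"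
    using TE_bound[OF i] a by simp_all
  have "d1 + d2 \<le> (d1 + d2) * E" using E1 hd by simp
  hence "TE i (al1 * exp (mu1 + ka1 * fst w)) (al2 * exp (mu2 + ka2 * (rho * fst w + ss * snd w)))
      \<le> (al1 * exp \<bar>mu1\<bar> + al2 * exp \<bar>mu2\<bar> + d1 + d2) * E"
    using tb(2) A1 A2 by (simp add: algebra_simps)
  thus ?thesis unfolding Fa_def E_def using tb(1)
    by (simp add: abs_mult mult.assoc mult_left_mono)
qed


lemma Fa_meas2[measurable]: "i = 1 \<or> i = 2 \<Longrightarrow> Fa al1 al2 i \<in> borel_measurable (borel \<Otimes>\<^sub>M borel)"
  using Fa_meas by (simp add: borel_prod)

lemma price_lb:
  "equity_price 0 0 Md12 Md21 d1 d2 r sig1 sig2 rho tau i a1 a2 =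
     (\<integral>z. std_normal_density (fst z) * std_normal_density (snd z) * Fa a1 a2 i z \<partial>lborel)"
  unfolding equity_price_def lborel_prod Fa_def terminal_asset1_def terminal_asset2_def by simp

lemma integrand_meas:
  assumes "i = 1 \<or> i = 2"
  shows "(\<lambda>z. std_normal_density (fst z) * std_normal_density (snd z) * Fa a1 a2 i z) \<in> borel_measurable borel"
proof -
  have [measurable]: "Fa a1 a2 i \<in> borel_measurable (borel \<Otimes>\<^sub>M borel)" using Fa_meas2[OF assms] .
  have "(\<lambda>z. std_normal_density (fst z) * std_normal_density (snd z) * Fa a1 a2 i z) \<in> borel_measurable (borel \<Otimes>\<^sub>M borel)"
    by measurable
  thus ?thesis by (simp add: borel_prod)
qed

lemma rep1:
  assumes i: "i = 1 \<or> i = 2" and a1: "0 < a1"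
  shows "equity_price 0 0 Md12 Md21 d1 d2 r sig1 sig2 rho tau i a1 a2 =
    (\<integral>w. std_normal_density (fst w - (1/ka1)*ln a1) * std_normal_density (snd w - (-(rho/(ka1* ss)))*ln a1)
          * Fa 1 a2 i w \<partial>lborel)"
proof -
  define t where "t = ln a1"
  have at: "a1 = exp t" unfolding t_def using a1 by simp
  define c where "c = (-(t/ka1), rho*t/(ka1* ss))"
  have k0: "ka1 \<noteq> 0" "ss \<noteq> 0" using ka_pos ss_props by auto
  have pt: "std_normal_density (fst (c + w)) * std_normal_density (snd (c + w)) * Fa a1 a2 i (c + w)
      = std_normal_density (fst w - (1/ka1)*t) * std_normal_density (snd w - (-(rho/(ka1* ss)))*t) * Fa 1 a2 i w" for w
  proof -
    have e1: "fst (c + w) = fst w - (1/ka1)*t" unfolding c_def by simp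
    have e2: "snd (c + w) = snd w - (-(rho/(ka1* ss)))*t" unfolding c_def by simp
    have e3: "a1 * exp (mu1 + ka1 * fst (c + w)) = 1 * exp (mu1 + ka1 * fst w)"
    proof -
      have "t + (mu1 + ka1 * fst (c + w)) = mu1 + ka1 * fst w" unfolding e1 using k0 by (simp add: field_simps)
      thus ?thesis unfolding at by (simp add: exp_add[symmetric])
    qed
    have e4: "rho * fst (c + w) + ss * snd (c + w) = rho * fst w + ss * snd w"
      unfolding c_def using k0 by (simp add: field_simps)
    show ?thesis unfolding Fa_def e3 e4 unfolding e1 e2 ..
  qed
  have "equity_price 0 0 Md12 Md21 d1 d2 r sig1 sig2 rho tau i a1 a2 =
     (\<integral>w. std_normal_density (fst (c + w)) * std_normal_density (snd (c + w)) * Fa a1 a2 i (c + w) \<partial>lborel)"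
    unfolding price_lb by (rule shift_integral_lb[OF integrand_meas[OF i]])
  also have "\<dots> = (\<integral>w. std_normal_density (fst w - (1/ka1)*t) * std_normal_density (snd w - (-(rho/(ka1* ss)))*t)
          * Fa 1 a2 i w \<partial>lborel)" unfolding pt ..
  finally show ?thesis unfolding t_def .
qed

lemma rep2:
  assumes i: "i = 1 \<or> i = 2" and a2: "0 < a2"
  shows "equity_price 0 0 Md12 Md21 d1 d2 r sig1 sig2 rho tau i a1 a2 =
    (\<integral>w. std_normal_density (fst w - 0*ln a2) * std_normal_density (snd w - (1/(ka2* ss))*ln a2)
          * Fa a1 1 i w \<partial>lborel)"
proof -
  define t where "t = ln a2"
  have at: "a2 = exp t" unfolding t_def using a2 by simp
  define c where "c = (0::real, -(t/(ka2* ss)))"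
  have k0: "ka2 \<noteq> 0" "ss \<noteq> 0" using ka_pos ss_props by auto
  have pt: "std_normal_density (fst (c + w)) * std_normal_density (snd (c + w)) * Fa a1 a2 i (c + w)
      = std_normal_density (fst w - 0*t) * std_normal_density (snd w - (1/(ka2* ss))*t) * Fa a1 1 i w" for w
  proof -
    have e1: "fst (c + w) = fst w" "fst w - 0*t = fst w" unfolding c_def by simp_all
    have e2: "snd (c + w) = snd w - (1/(ka2* ss))*t" unfolding c_def by simp
    have e4: "a2 * exp (mu2 + ka2 * (rho * fst (c + w) + ss * snd (c + w))) = 1 * exp (mu2 + ka2 * (rho * fst w + ss * snd w))"
    proof -
      have "t + (mu2 + ka2 * (rho * fst (c + w) + ss * snd (c + w))) = mu2 + ka2 * (rho * fst w + ss * snd w)"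
        unfolding e1 e2 using k0 by (simp add: field_simps)
      thus ?thesis unfolding at by (simp add: exp_add[symmetric])
    qed
    show ?thesis unfolding Fa_def e4 unfolding e1 e2 ..
  qed
  have "equity_price 0 0 Md12 Md21 d1 d2 r sig1 sig2 rho tau i a1 a2 =
     (\<integral>w. std_normal_density (fst (c + w)) * std_normal_density (snd (c + w)) * Fa a1 a2 i (c + w) \<partial>lborel)"
    unfolding price_lb by (rule shift_integral_lb[OF integrand_meas[OF i]])
  also have "\<dots> = (\<integral>w. std_normal_density (fst w - 0*t) * std_normal_density (snd w - (1/(ka2* ss))*t)
          * Fa a1 1 i w \<partial>lborel)" unfolding pt ..
  finally show ?thesis unfolding t_def .
qed

lemma diff1:
  assumes i: "i = 1 \<or> i = 2" and a: "0 < a1" "0 < a2"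
  shows "\<exists>D. ((\<lambda>u. equity_price 0 0 Md12 Md21 d1 d2 r sig1 sig2 rho tau i u a2) has_real_derivative D) (at a1)"
proof -
  define Q where "Q t = (\<integral>w. std_normal_density (fst w - (1/ka1)*t) * std_normal_density (snd w - (-(rho/(ka1* ss)))*t)
          * Fa 1 a2 i w \<partial>lborel)" for t
  obtain D where D: "(Q has_real_derivative D) (at (ln a1))"
    using diff_lemma[OF Fa_meas[OF i] Fa_bound[OF i _ a(2)], of 1 "1/ka1" "-(rho/(ka1* ss))" "ln a1"] ka_pos
    unfolding Q_def by auto
  have "((\<lambda>u. Q (ln u)) has_real_derivative D * inverse a1) (at a1)"
    by (rule DERIV_chain2[OF D DERIV_ln[OF a(1)]])
  hence "((\<lambda>u. equity_price 0 0 Md12 Md21 d1 d2 r sig1 sig2 rho tau i u a2) has_real_derivative D * inverse a1) (at a1)"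
    by (rule has_field_derivative_transform_within_open[where S="{0<..}"]) (use a in \<open>auto simp: Q_def rep1[OF i]\<close>)
  thus ?thesis by blast
qed

lemma diff2:
  assumes i: "i = 1 \<or> i = 2" and a: "0 < a1" "0 < a2"
  shows "\<exists>D. ((\<lambda>u. equity_price 0 0 Md12 Md21 d1 d2 r sig1 sig2 rho tau i a1 u) has_real_derivative D) (at a2)"
proof -
  define Q where "Q t = (\<integral>w. std_normal_density (fst w - 0*t) * std_normal_density (snd w - (1/(ka2* ss))*t)
          * Fa a1 1 i w \<partial>lborel)" for t
  obtain D where D: "(Q has_real_derivative D) (at (ln a2))"
    using diff_lemma[OF Fa_meas[OF i] Fa_bound[OF i a(1)], of 1 0 "1/(ka2* ss)" "ln a2"] ka_pos
    unfolding Q_def by auto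
  have "((\<lambda>u. Q (ln u)) has_real_derivative D * inverse a2) (at a2)"
    by (rule DERIV_chain2[OF D DERIV_ln[OF a(2)]])
  hence "((\<lambda>u. equity_price 0 0 Md12 Md21 d1 d2 r sig1 sig2 rho tau i a1 u) has_real_derivative D * inverse a2) (at a2)"
    by (rule has_field_derivative_transform_within_open[where S="{0<..}"]) (use a in \<open>auto simp: Q_def rep2[OF i]\<close>)
  thus ?thesis by blast
qed

end

lemma quot_own:
  assumes hM: "0 \<le> M" "M < 1" "0 \<le> N" "N < 1" and d: "0 < d" "0 < e"
    and a: "2*d \<le> a" and h: "h \<noteq> 0" "\<bar>h\<bar> \<le> a/2" and E: "0 < E" and y: "0 \<le> y"
  shows "(if 1 \<le> E then 1 else 0) \<le> (Sf M N d e ((a+h)*E) y - Sf M N d e (a*E) y)/h"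
proof -
  have a0: "0 < a" using a d by linarith
  have ah: "a/2 \<le> a + h" using h by linarith
  have x0: "0 \<le> a*E" using a0 E by simp
  have x1: "(a/2)*E \<le> (a+h)*E" using ah E by (simp add: mult_right_mono)
  have x1': "0 \<le> (a+h)*E" using ah a0 E by (intro mult_nonneg_nonneg) simp_all
  have dif: "(a+h)*E - a*E = h*E" by (simp add: algebra_simps)
  show ?thesis
  proof (cases "0 < h")
    case True
    have le: "a*E \<le> (a+h)*E" using True E by (simp add: mult_right_mono)
    have m: "0 \<le> Sf M N d e ((a+h)*E) y - Sf M N d e (a*E) y"
      using Sf_mono_own(1)[OF hM d x0 y le] by simp
    show ?thesis
    proof (cases "1 \<le> E")
      case E1: True
      have "a \<le> a*E" using E1 a0 by (simp add: mult_le_cancel_left1)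
      hence "d \<le> a*E" using a d by linarith
      hence "(a+h)*E - a*E \<le> Sf M N d e ((a+h)*E) y - Sf M N d e (a*E) y"
        using Sf_mono_own(2)[OF hM d x0 y le] by simp
      moreover have "h \<le> h*E" using E1 True by (simp add: mult_le_cancel_left1)
      ultimately have "h \<le> Sf M N d e ((a+h)*E) y - Sf M N d e (a*E) y" unfolding dif by linarith
      thus ?thesis using E1 True by (simp add: le_divide_eq)
    next
      case False
      thus ?thesis using m True by simp
    qed
  next
    case False
    hence hn: "h < 0" using h by simp
    have le: "(a+h)*E \<le> a*E" using hn E by (simp add: mult_right_mono)
    have m: "0 \<le> Sf M N d e (a*E) y - Sf M N d e ((a+h)*E) y"
      using Sf_mono_own(1)[OF hM d x1' y le] by simp
    have eq: "(Sf M N d e ((a+h)*E) y - Sf M N d e (a*E) y)/h = (Sf M N d e (a*E) y - Sf M N d e ((a+h)*E) y)/(-h)"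
    proof -
      have "Sf M N d e (a*E) y - Sf M N d e ((a+h)*E) y = -(Sf M N d e ((a+h)*E) y - Sf M N d e (a*E) y)" by simp
      thus ?thesis by (simp only: minus_divide_divide)
    qed
    show ?thesis
    proof (cases "1 \<le> E")
      case E1: True
      have "a/2 \<le> (a/2)*E" using E1 a0 by (simp add: mult_le_cancel_left1)
      hence "d \<le> (a+h)*E" using x1 a by linarith
      hence "a*E - (a+h)*E \<le> Sf M N d e (a*E) y - Sf M N d e ((a+h)*E) y"
        using Sf_mono_own(2)[OF hM d x1' y le] by simp
      moreover have "-h \<le> (-h)*E" using E1 hn by (simp add: mult_le_cancel_left1)
      moreover have "a*E - (a+h)*E = (-h)*E" by (simp add: algebra_simps)
      ultimately have "-h \<le> Sf M N d e (a*E) y - Sf M N d e ((a+h)*E) y" by linarith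
      hence "1 \<le> (Sf M N d e (a*E) y - Sf M N d e ((a+h)*E) y)/(-h)"
        using hn by (subst le_divide_eq_1_pos) simp_all
      thus ?thesis unfolding eq using E1 by simp
    next
      case False
      have "0 \<le> (Sf M N d e (a*E) y - Sf M N d e ((a+h)*E) y)/(-h)"
        using m hn by (intro divide_nonneg_pos) simp_all
      thus ?thesis unfolding eq using False by simp
    qed
  qed
qed

lemma quot_other:
  assumes hM: "0 \<le> M" "M < 1" "0 \<le> N" "N < 1" and d: "0 < d" "0 < e"
    and b: "0 < b" and h: "h \<noteq> 0" "\<bar>h\<bar> \<le> b/2" and E: "0 < E" and x: "0 \<le> x"
  shows "\<bar>(Sf M N d e x ((b+h)*E) - Sf M N d e x (b*E))/h\<bar> \<le> M/(1-N*M)*(2*e/b)"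
proof -
  have D: "0 < 1 - N*M" using den_pos[OF hM(3,4,1,2)] by simp
  have L: "0 \<le> M/(1-N*M)" using D hM by simp
  have bh: "b/2 \<le> b + h" using h by linarith
  have y1: "(b/2)*E \<le> (b+h)*E" using bh E by (simp add: mult_right_mono)
  show ?thesis
  proof (cases "e \<le> (b/2)*E")
    case True
    have "(b/2)*E \<le> b*E" using b E by (simp add: mult_right_mono)
    hence "e \<le> b*E" using True by linarith
    hence "Sf M N d e x ((b+h)*E) = Sf M N d e x (b*E)"
      using Sf_sat_other[OF hM d x, of "(b+h)*E" "b*E"] True y1 by linarith
    moreover have "0 \<le> M/(1-N*M)*(2*e/b)" by (rule mult_nonneg_nonneg[OF L]) (use b d in simp)
    ultimately show ?thesis by simp
  next
    case False
    hence Eb: "E \<le> 2*e/b" using b by (simp add: field_simps)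
    have "\<bar>Sf M N d e x ((b+h)*E) - Sf M N d e x (b*E)\<bar> \<le> M/(1-N*M) * \<bar>(b+h)*E - b*E\<bar>"
      by (rule Sf_lip_other[OF hM])
    also have "\<bar>(b+h)*E - b*E\<bar> = \<bar>h\<bar> * E" using E by (simp add: algebra_simps abs_mult)
    finally have "\<bar>Sf M N d e x ((b+h)*E) - Sf M N d e x (b*E)\<bar> \<le> M/(1-N*M) * (\<bar>h\<bar> * E)" .
    hence "\<bar>Sf M N d e x ((b+h)*E) - Sf M N d e x (b*E)\<bar> / \<bar>h\<bar> \<le> (M/(1-N*M) * (\<bar>h\<bar> * E)) / \<bar>h\<bar>"
      by (rule divide_right_mono) simp
    also have "(M/(1-N*M) * (\<bar>h\<bar> * E)) / \<bar>h\<bar> = M/(1-N*M) * E" using h by simp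
    finally have "\<bar>(Sf M N d e x ((b+h)*E) - Sf M N d e x (b*E))/h\<bar> \<le> M/(1-N*M) * E"
      by (simp add: abs_divide)
    also have "\<dots> \<le> M/(1-N*M)*(2*e/b)" by (rule mult_left_mono[OF Eb L])
    finally show ?thesis .
  qed
qed

lemma deriv_lower:
  fixes f :: "real \<Rightarrow> real"
  assumes D: "(f has_real_derivative D) (at x)" and del: "0 < \<delta>"
    and q: "\<And>h. h \<noteq> 0 \<Longrightarrow> \<bar>h\<bar> \<le> \<delta> \<Longrightarrow> L \<le> (f (x+h) - f x)/h"
  shows "L \<le> D"
proof (rule tendsto_lowerbound)
  show "((\<lambda>y. (f y - f x)/(y - x)) \<longlongrightarrow> D) (at x)" using D unfolding has_field_derivative_iff .
  show "\<forall>\<^sub>F y in at x. L \<le> (f y - f x)/(y - x)"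
    unfolding eventually_at
    by (rule exI[of _ \<delta>]) (use del q[of "_ - x"] in \<open>auto simp: dist_real_def\<close>)
qed simp

lemma deriv_abs:
  fixes f :: "real \<Rightarrow> real"
  assumes D: "(f has_real_derivative D) (at x)" and del: "0 < \<delta>"
    and q: "\<And>h. h \<noteq> 0 \<Longrightarrow> \<bar>h\<bar> \<le> \<delta> \<Longrightarrow> \<bar>(f (x+h) - f x)/h\<bar> \<le> U"
  shows "\<bar>D\<bar> \<le> U"
proof (rule tendsto_upperbound)
  show "((\<lambda>y. \<bar>(f y - f x)/(y - x)\<bar>) \<longlongrightarrow> \<bar>D\<bar>) (at x)"
    using D unfolding has_field_derivative_iff by (rule tendsto_rabs)
  show "\<forall>\<^sub>F y in at x. \<bar>(f y - f x)/(y - x)\<bar> \<le> U"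
    unfolding eventually_at
    by (rule exI[of _ \<delta>]) (use del q[of "_ - x"] in \<open>auto simp: dist_real_def\<close>)
qed simp


abbreviation psi :: "real \<times> real \<Rightarrow> real" where
  "psi z \<equiv> std_normal_density (fst z) * std_normal_density (snd z)"

lemma psi_int_lb: "integrable lborel psi" and psi_integral_lb: "(\<integral>z. psi z \<partial>lborel) = 1"
  using psi_int psi_integral unfolding lborel_prod by simp_all

lemma psi_nonneg: "0 \<le> psi z" by simp

lemma psi_bounded_int:
  assumes gm: "g \<in> borel_measurable (borel \<Otimes>\<^sub>M borel)" and gb: "\<And>z. \<bar>g z\<bar> \<le> B"
  shows "integrable lborel (\<lambda>z. psi z * g z)"
proof (rule Bochner_Integration.integrable_bound)
  show "integrable lborel (\<lambda>z. psi z * B)" using psi_int_lb by simp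
  have [measurable]: "g \<in> borel_measurable (borel \<Otimes>\<^sub>M borel)" by (rule gm)
  have "(\<lambda>z. psi z * g z) \<in> borel_measurable (borel \<Otimes>\<^sub>M borel)" by measurable
  thus "(\<lambda>z. psi z * g z) \<in> borel_measurable lborel" by (simp add: borel_prod)
  show "AE z in lborel. norm (psi z * g z) \<le> norm (psi z * B)"
  proof (rule AE_I2)
    fix z :: "real \<times> real"
    have "\<bar>psi z * g z\<bar> = psi z * \<bar>g z\<bar>" by (simp add: abs_mult)
    also have "\<dots> \<le> psi z * B" by (rule mult_left_mono[OF gb psi_nonneg])
    also have "\<dots> \<le> \<bar>psi z * B\<bar>" by simp
    finally show "norm (psi z * g z) \<le> norm (psi z * B)" by simp
  qed
qed

context mdl begin

abbreviation P :: "nat \<Rightarrow> real \<Rightarrow> real \<Rightarrow> real" where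
  "P i a1 a2 \<equiv> equity_price 0 0 Md12 Md21 d1 d2 r sig1 sig2 rho tau i a1 a2"

lemma orig_int:
  assumes i: "i = 1 \<or> i = 2" and a: "0 < a1" "0 < a2"
  shows "integrable lborel (\<lambda>z. psi z * Fa a1 a2 i z)"
  using g_int[OF Fa_meas[OF i] Fa_bound[OF i a], of 0 0 0] ka_pos by simp

lemma quot_int:
  assumes i: "i = 1 \<or> i = 2" and a: "0 < a1" "0 < a2" "0 < b1" "0 < b2"
  shows "(P i b1 b2 - P i a1 a2)/h = (\<integral>z. psi z * ((Fa b1 b2 i z - Fa a1 a2 i z)/h) \<partial>lborel)"
proof -
  have "P i b1 b2 - P i a1 a2 = (\<integral>z. psi z * Fa b1 b2 i z - psi z * Fa a1 a2 i z \<partial>lborel)"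
    unfolding price_lb using orig_int[OF i a(3,4)] orig_int[OF i a(1,2)] by simp
  hence "(P i b1 b2 - P i a1 a2)/h = (\<integral>z. (psi z * Fa b1 b2 i z - psi z * Fa a1 a2 i z)/h \<partial>lborel)"
    by simp
  also have "\<dots> = (\<integral>z. psi z * ((Fa b1 b2 i z - Fa a1 a2 i z)/h) \<partial>lborel)"
    by (rule Bochner_Integration.integral_cong) (simp_all add: algebra_simps diff_divide_distrib)
  finally show ?thesis .
qed

lemma quot_int_integrable:
  assumes i: "i = 1 \<or> i = 2" and a: "0 < a1" "0 < a2" "0 < b1" "0 < b2"
  shows "integrable lborel (\<lambda>z. psi z * ((Fa b1 b2 i z - Fa a1 a2 i z)/h))"
proof -
  have "integrable lborel (\<lambda>z. (psi z * Fa b1 b2 i z - psi z * Fa a1 a2 i z)/h)"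
    using orig_int[OF i a(3,4)] orig_int[OF i a(1,2)] by simp
  thus ?thesis by (rule Bochner_Integration.integrable_cong[THEN iffD1, rotated 2]) (simp_all add: algebra_simps diff_divide_distrib)
qed

definition ind1 :: "real \<times> real \<Rightarrow> real" where
  "ind1 z = (if 1 \<le> exp (mu1 + ka1 * fst z) then 1 else 0)"
definition ind2 :: "real \<times> real \<Rightarrow> real" where
  "ind2 z = (if 1 \<le> exp (mu2 + ka2 * (rho * fst z + ss * snd z)) then 1 else 0)"
definition pp1 where "pp1 = (\<integral>z. psi z * ind1 z \<partial>lborel)"
definition pp2 where "pp2 = (\<integral>z. psi z * ind2 z \<partial>lborel)"

lemma ind_meas[measurable]: "ind1 \<in> borel_measurable (borel \<Otimes>\<^sub>M borel)" "ind2 \<in> borel_measurable (borel \<Otimes>\<^sub>M borel)"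
  unfolding ind1_def ind2_def by measurable

lemma ind_int: "integrable lborel (\<lambda>z. psi z * ind1 z)" "integrable lborel (\<lambda>z. psi z * ind2 z)"
proof -
  show "integrable lborel (\<lambda>z. psi z * ind1 z)" by (rule psi_bounded_int[where B=1]) (measurable, simp add: ind1_def)
  show "integrable lborel (\<lambda>z. psi z * ind2 z)" by (rule psi_bounded_int[where B=1]) (measurable, simp add: ind2_def)
qed

lemma quot11:
  assumes a: "2*d1 \<le> a1" "0 < a2" and h: "h \<noteq> 0" "\<bar>h\<bar> \<le> a1/2"
  shows "exp (- r * tau) * pp1 \<le> (P 1 (a1+h) a2 - P 1 a1 a2)/h"
proof -
  have a1: "0 < a1" "0 < a1 + h" using a h hd by linarith+
  have "exp (- r * tau) * pp1 = (\<integral>z. psi z * (exp (- r * tau) * ind1 z) \<partial>lborel)"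
    unfolding pp1_def by (simp add: mult.left_commute)
  also have "\<dots> \<le> (\<integral>z. psi z * ((Fa (a1+h) a2 1 z - Fa a1 a2 1 z)/h) \<partial>lborel)"
  proof (rule integral_mono)
    show "integrable lborel (\<lambda>z. psi z * (exp (- r * tau) * ind1 z))"
      using ind_int(1) by (simp add: mult.left_commute)
    show "integrable lborel (\<lambda>z. psi z * ((Fa (a1+h) a2 1 z - Fa a1 a2 1 z)/h))"
      by (rule quot_int_integrable) (use a1 a in auto)
    fix z :: "real \<times> real"
    define E where "E = exp (mu1 + ka1 * fst z)"
    define y where "y = a2 * exp (mu2 + ka2 * (rho * fst z + ss * snd z))"
    have E: "0 < E" unfolding E_def by simp
    have y: "0 \<le> y" unfolding y_def using a by simp
    have q: "ind1 z \<le> (Sf Md12 Md21 d1 d2 ((a1+h)*E) y - Sf Md12 Md21 d1 d2 (a1*E) y)/h"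
      using quot_own[OF hM hd a(1) h E y] unfolding ind1_def E_def by simp
    have "(Fa (a1+h) a2 1 z - Fa a1 a2 1 z)/h
        = exp (- r * tau) * ((Sf Md12 Md21 d1 d2 ((a1+h)*E) y - Sf Md12 Md21 d1 d2 (a1*E) y)/h)"
      unfolding Fa_def TE_Sf E_def y_def by (simp add: right_diff_distrib)
    moreover have "exp (- r * tau) * ind1 z \<le> exp (- r * tau) * ((Sf Md12 Md21 d1 d2 ((a1+h)*E) y - Sf Md12 Md21 d1 d2 (a1*E) y)/h)"
      by (rule mult_left_mono[OF q]) simp
    ultimately have "exp (- r * tau) * ind1 z \<le> (Fa (a1+h) a2 1 z - Fa a1 a2 1 z)/h" by linarith
    thus "psi z * (exp (- r * tau) * ind1 z) \<le> psi z * ((Fa (a1+h) a2 1 z - Fa a1 a2 1 z)/h)"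
      by (rule mult_left_mono) simp
  qed
  also have "\<dots> = (P 1 (a1+h) a2 - P 1 a1 a2)/h"
    by (rule quot_int[symmetric]) (use a1 a in auto)
  finally show ?thesis .
qed

lemma quot22:
  assumes a: "0 < a1" "2*d2 \<le> a2" and h: "h \<noteq> 0" "\<bar>h\<bar> \<le> a2/2"
  shows "exp (- r * tau) * pp2 \<le> (P 2 a1 (a2+h) - P 2 a1 a2)/h"
proof -
  have a2: "0 < a2" "0 < a2 + h" using a h hd by linarith+
  have "exp (- r * tau) * pp2 = (\<integral>z. psi z * (exp (- r * tau) * ind2 z) \<partial>lborel)"
    unfolding pp2_def by (simp add: mult.left_commute)
  also have "\<dots> \<le> (\<integral>z. psi z * ((Fa a1 (a2+h) 2 z - Fa a1 a2 2 z)/h) \<partial>lborel)"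
  proof (rule integral_mono)
    show "integrable lborel (\<lambda>z. psi z * (exp (- r * tau) * ind2 z))"
      using ind_int(2) by (simp add: mult.left_commute)
    show "integrable lborel (\<lambda>z. psi z * ((Fa a1 (a2+h) 2 z - Fa a1 a2 2 z)/h))"
      by (rule quot_int_integrable) (use a2 a in auto)
    fix z :: "real \<times> real"
    define E where "E = exp (mu2 + ka2 * (rho * fst z + ss * snd z))"
    define y where "y = a1 * exp (mu1 + ka1 * fst z)"
    have E: "0 < E" unfolding E_def by simp
    have y: "0 \<le> y" unfolding y_def using a by simp
    have q: "ind2 z \<le> (Sf Md21 Md12 d2 d1 ((a2+h)*E) y - Sf Md21 Md12 d2 d1 (a2*E) y)/h"
      using quot_own[OF hM(3,4,1,2) hd(2,1) a(2) h E y] unfolding ind2_def E_def by simp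
    have "(Fa a1 (a2+h) 2 z - Fa a1 a2 2 z)/h
        = exp (- r * tau) * ((Sf Md21 Md12 d2 d1 ((a2+h)*E) y - Sf Md21 Md12 d2 d1 (a2*E) y)/h)"
      unfolding Fa_def TE_Sf E_def y_def by (simp add: right_diff_distrib)
    moreover have "exp (- r * tau) * ind2 z \<le> exp (- r * tau) * ((Sf Md21 Md12 d2 d1 ((a2+h)*E) y - Sf Md21 Md12 d2 d1 (a2*E) y)/h)"
      by (rule mult_left_mono[OF q]) simp
    ultimately have "exp (- r * tau) * ind2 z \<le> (Fa a1 (a2+h) 2 z - Fa a1 a2 2 z)/h" by linarith
    thus "psi z * (exp (- r * tau) * ind2 z) \<le> psi z * ((Fa a1 (a2+h) 2 z - Fa a1 a2 2 z)/h)"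
      by (rule mult_left_mono) simp
  qed
  also have "\<dots> = (P 2 a1 (a2+h) - P 2 a1 a2)/h"
    by (rule quot_int[symmetric]) (use a2 a in auto)
  finally show ?thesis .
qed

lemma abs_int_bound:
  assumes "integrable lborel f" "\<And>z. \<bar>f z\<bar> \<le> psi z * C"
  shows "\<bar>\<integral>z. f z \<partial>lborel\<bar> \<le> C"
proof -
  have "\<bar>\<integral>z. f z \<partial>lborel\<bar> \<le> (\<integral>z. \<bar>f z\<bar> \<partial>lborel)"
    using integral_norm_bound[of lborel f] by simp
  also have "\<dots> \<le> (\<integral>z. psi z * C \<partial>lborel)"
    by (rule integral_mono) (use assms psi_int_lb in auto)
  also have "\<dots> = C" using psi_integral_lb by simp
  finally show ?thesis .
qed

lemma quot12:
  assumes a: "0 < a1" "0 < a2" and h: "h \<noteq> 0" "\<bar>h\<bar> \<le> a2/2"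
  shows "\<bar>(P 1 a1 (a2+h) - P 1 a1 a2)/h\<bar> \<le> exp (- r * tau) * (Md12/(1-Md21*Md12)*(2*d2/a2))"
proof -
  have a2: "0 < a2 + h" using a h by linarith
  have eq: "(P 1 a1 (a2+h) - P 1 a1 a2)/h = (\<integral>z. psi z * ((Fa a1 (a2+h) 1 z - Fa a1 a2 1 z)/h) \<partial>lborel)"
    by (rule quot_int) (use a a2 in auto)
  show ?thesis unfolding eq
  proof (rule abs_int_bound)
    show "integrable lborel (\<lambda>z. psi z * ((Fa a1 (a2+h) 1 z - Fa a1 a2 1 z)/h))"
      by (rule quot_int_integrable) (use a2 a in auto)
    fix z :: "real \<times> real"
    define E where "E = exp (mu2 + ka2 * (rho * fst z + ss * snd z))"
    define x where "x = a1 * exp (mu1 + ka1 * fst z)"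
    have E: "0 < E" unfolding E_def by simp
    have x: "0 \<le> x" unfolding x_def using a by simp
    have q: "\<bar>(Sf Md12 Md21 d1 d2 x ((a2+h)*E) - Sf Md12 Md21 d1 d2 x (a2*E))/h\<bar> \<le> Md12/(1-Md21*Md12)*(2*d2/a2)"
      by (rule quot_other[OF hM hd a(2) h E x])
    have eqn: "(Fa a1 (a2+h) 1 z - Fa a1 a2 1 z)/h
        = exp (- r * tau) * ((Sf Md12 Md21 d1 d2 x ((a2+h)*E) - Sf Md12 Md21 d1 d2 x (a2*E))/h)"
      unfolding Fa_def TE_Sf E_def x_def by (simp add: right_diff_distrib)
    have "\<bar>(Fa a1 (a2+h) 1 z - Fa a1 a2 1 z)/h\<bar> = exp (- r * tau) * \<bar>(Sf Md12 Md21 d1 d2 x ((a2+h)*E) - Sf Md12 Md21 d1 d2 x (a2*E))/h\<bar>"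
      unfolding eqn abs_mult by simp
    moreover have "exp (- r * tau) * \<bar>(Sf Md12 Md21 d1 d2 x ((a2+h)*E) - Sf Md12 Md21 d1 d2 x (a2*E))/h\<bar> \<le> exp (- r * tau) * (Md12/(1-Md21*Md12)*(2*d2/a2))"
      by (rule mult_left_mono[OF q]) simp
    ultimately have "\<bar>(Fa a1 (a2+h) 1 z - Fa a1 a2 1 z)/h\<bar> \<le> exp (- r * tau) * (Md12/(1-Md21*Md12)*(2*d2/a2))"
      by linarith
    hence "psi z * \<bar>(Fa a1 (a2+h) 1 z - Fa a1 a2 1 z)/h\<bar> \<le> psi z * (exp (- r * tau) * (Md12/(1-Md21*Md12)*(2*d2/a2)))"
      by (rule mult_left_mono) simp
    thus "\<bar>psi z * ((Fa a1 (a2+h) 1 z - Fa a1 a2 1 z)/h)\<bar> \<le> psi z * (exp (- r * tau) * (Md12/(1-Md21*Md12)*(2*d2/a2)))"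
      by (simp add: abs_mult)
  qed
qed

lemma quot21:
  assumes a: "0 < a1" "0 < a2" and h: "h \<noteq> 0" "\<bar>h\<bar> \<le> a1/2"
  shows "\<bar>(P 2 (a1+h) a2 - P 2 a1 a2)/h\<bar> \<le> exp (- r * tau) * (Md21/(1-Md12*Md21)*(2*d1/a1))"
proof -
  have a1: "0 < a1 + h" using a h by linarith
  have eq: "(P 2 (a1+h) a2 - P 2 a1 a2)/h = (\<integral>z. psi z * ((Fa (a1+h) a2 2 z - Fa a1 a2 2 z)/h) \<partial>lborel)"
    by (rule quot_int) (use a a1 in auto)
  show ?thesis unfolding eq
  proof (rule abs_int_bound)
    show "integrable lborel (\<lambda>z. psi z * ((Fa (a1+h) a2 2 z - Fa a1 a2 2 z)/h))"
      by (rule quot_int_integrable) (use a1 a in auto)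
    fix z :: "real \<times> real"
    define E where "E = exp (mu1 + ka1 * fst z)"
    define x where "x = a2 * exp (mu2 + ka2 * (rho * fst z + ss * snd z))"
    have E: "0 < E" unfolding E_def by simp
    have x: "0 \<le> x" unfolding x_def using a by simp
    have q: "\<bar>(Sf Md21 Md12 d2 d1 x ((a1+h)*E) - Sf Md21 Md12 d2 d1 x (a1*E))/h\<bar> \<le> Md21/(1-Md12*Md21)*(2*d1/a1)"
      by (rule quot_other[OF hM(3,4,1,2) hd(2,1) a(1) h E x])
    have eqn: "(Fa (a1+h) a2 2 z - Fa a1 a2 2 z)/h
        = exp (- r * tau) * ((Sf Md21 Md12 d2 d1 x ((a1+h)*E) - Sf Md21 Md12 d2 d1 x (a1*E))/h)"
      unfolding Fa_def TE_Sf E_def x_def by (simp add: right_diff_distrib)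
    have "\<bar>(Fa (a1+h) a2 2 z - Fa a1 a2 2 z)/h\<bar> = exp (- r * tau) * \<bar>(Sf Md21 Md12 d2 d1 x ((a1+h)*E) - Sf Md21 Md12 d2 d1 x (a1*E))/h\<bar>"
      unfolding eqn abs_mult by simp
    moreover have "exp (- r * tau) * \<bar>(Sf Md21 Md12 d2 d1 x ((a1+h)*E) - Sf Md21 Md12 d2 d1 x (a1*E))/h\<bar> \<le> exp (- r * tau) * (Md21/(1-Md12*Md21)*(2*d1/a1))"
      by (rule mult_left_mono[OF q]) simp
    ultimately have "\<bar>(Fa (a1+h) a2 2 z - Fa a1 a2 2 z)/h\<bar> \<le> exp (- r * tau) * (Md21/(1-Md12*Md21)*(2*d1/a1))"
      by linarith
    hence "psi z * \<bar>(Fa (a1+h) a2 2 z - Fa a1 a2 2 z)/h\<bar> \<le> psi z * (exp (- r * tau) * (Md21/(1-Md12*Md21)*(2*d1/a1)))"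
      by (rule mult_left_mono) simp
    thus "\<bar>psi z * ((Fa (a1+h) a2 2 z - Fa a1 a2 2 z)/h)\<bar> \<le> psi z * (exp (- r * tau) * (Md21/(1-Md12*Md21)*(2*d1/a1)))"
      by (simp add: abs_mult)
  qed
qed

end

lemma pos_integral_cbox:
  fixes f :: "real \<times> real \<Rightarrow> real"
  assumes fi: "integrable lborel f" and nn: "\<And>z. 0 \<le> f z"
    and pos: "\<And>z. z \<in> cbox (a, c) (b, d) \<Longrightarrow> 0 < f z" and ab: "a < b" "c < d"
  shows "0 < (\<integral>z. f z \<partial>lborel)"
proof -
  have ge: "0 \<le> (\<integral>z. f z \<partial>lborel)" using nn by simp
  have "(\<integral>z. f z \<partial>lborel) \<noteq> 0"
  proof
    assume "(\<integral>z. f z \<partial>lborel) = 0"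
    hence "AE z in lborel. f z = 0" using integral_nonneg_eq_0_iff_AE[OF fi] nn by simp
    hence ae: "AE z in lborel. z \<notin> cbox (a, c) (b, d)"
      by (rule eventually_mono) (use pos in force)
    have cs: "cbox (a, c) (b, d) \<in> sets lborel" by simp
    have "emeasure lborel (cbox (a, c) (b, d)) = 0"
      using ae AE_iff_measurable[OF cs, of "\<lambda>z. z \<notin> cbox (a, c) (b, d)"] by simp
    moreover have "emeasure lborel (cbox (a, c) (b, d)) = ennreal (b - a) * ennreal (d - c)"
    proof -
      have "emeasure lborel (cbox (a, c) (b, d)) = emeasure (lborel \<Otimes>\<^sub>M lborel) ({a..b} \<times> {c..d})"
        unfolding lborel_prod cbox_Pair_eq by simp
      also have "\<dots> = emeasure lborel {a..b} * emeasure lborel {c..d}"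
        by (rule lborel.emeasure_pair_measure_Times) simp_all
      finally show ?thesis using ab by simp
    qed
    ultimately show False using ab by (simp add: ennreal_mult''[symmetric])
  qed
  thus ?thesis using ge by simp
qed

context mdl begin

lemma psi_pos: "0 < psi z" by (simp add: normal_density_pos)

lemma pp1_pos: "0 < pp1"
  unfolding pp1_def
proof (rule pos_integral_cbox[where a = "\<bar>mu1\<bar>/ka1" and b = "\<bar>mu1\<bar>/ka1 + 1" and c = 0 and d = 1])
  show "integrable lborel (\<lambda>z. psi z * ind1 z)" by (rule ind_int)
  show "0 \<le> psi z * ind1 z" for z by (simp add: ind1_def)
  fix z :: "real \<times> real" assume z: "z \<in> cbox (\<bar>mu1\<bar>/ka1, 0) (\<bar>mu1\<bar>/ka1 + 1, 1)"
  obtain z1 z2 where zz: "z = (z1, z2)" by (cases z)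
  have "\<bar>mu1\<bar>/ka1 \<le> z1" using z unfolding zz by (simp add: cbox_Pair_eq)
  hence "\<bar>mu1\<bar> \<le> ka1 * z1" using ka_pos by (simp add: divide_le_eq mult.commute)
  hence "1 \<le> exp (mu1 + ka1 * fst z)" unfolding zz by simp
  thus "0 < psi z * ind1 z" unfolding ind1_def using psi_pos[of z] by simp
qed simp_all

lemma pp2_pos: "0 < pp2"
  unfolding pp2_def
proof (rule pos_integral_cbox[where a = 0 and b = 1 and c = "(\<bar>mu2\<bar>/ka2 + 1)/ss" and d = "(\<bar>mu2\<bar>/ka2 + 1)/ss + 1"])
  show "integrable lborel (\<lambda>z. psi z * ind2 z)" by (rule ind_int)
  show "0 \<le> psi z * ind2 z" for z by (simp add: ind2_def)
  fix z :: "real \<times> real" assume z: "z \<in> cbox (0, (\<bar>mu2\<bar>/ka2 + 1)/ss) (1, (\<bar>mu2\<bar>/ka2 + 1)/ss + 1)"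
  obtain z1 z2 where zz: "z = (z1, z2)" by (cases z)
  have z1: "0 \<le> z1" "z1 \<le> 1" and z2: "(\<bar>mu2\<bar>/ka2 + 1)/ss \<le> z2" using z unfolding zz by (simp_all add: cbox_Pair_eq)
  have "\<bar>mu2\<bar>/ka2 + 1 \<le> ss * z2" using z2 ss_props by (simp add: divide_le_eq mult.commute)
  moreover have "-1 \<le> rho * z1"
  proof -
    have "\<bar>rho * z1\<bar> \<le> 1" using hr z1 by (simp add: abs_mult mult_le_one)
    thus ?thesis by linarith
  qed
  ultimately have "\<bar>mu2\<bar>/ka2 \<le> rho * z1 + ss * z2" by linarith
  hence "\<bar>mu2\<bar> \<le> ka2 * (rho * z1 + ss * z2)" using ka_pos by (simp add: divide_le_eq mult.commute)
  hence "1 \<le> exp (mu2 + ka2 * (rho * fst z + ss * snd z))" unfolding zz by simp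
  thus "0 < psi z * ind2 z" unfolding ind2_def using psi_pos[of z] by simp
qed simp_all

lemma P1_pos:
  assumes a: "d1 < a1" "0 < a2"
  shows "0 < P 1 a1 a2"
proof -
  have a1: "0 < a1" using a hd by linarith
  have "0 < exp (- r * tau) * (a1 - d1) * pp1" using a pp1_pos by simp
  also have "exp (- r * tau) * (a1 - d1) * pp1 = (\<integral>z. psi z * (exp (- r * tau) * (a1 - d1) * ind1 z) \<partial>lborel)"
    unfolding pp1_def by (simp add: mult.left_commute)
  also have "\<dots> \<le> (\<integral>z. psi z * Fa a1 a2 1 z \<partial>lborel)"
  proof (rule integral_mono)
    show "integrable lborel (\<lambda>z. psi z * (exp (- r * tau) * (a1 - d1) * ind1 z))"
      using ind_int(1) by (simp add: mult.left_commute)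
    show "integrable lborel (\<lambda>z. psi z * Fa a1 a2 1 z)" by (rule orig_int) (use a1 a in auto)
    fix z :: "real \<times> real"
    define E where "E = exp (mu1 + ka1 * fst z)"
    define y where "y = a2 * exp (mu2 + ka2 * (rho * fst z + ss * snd z))"
    have y: "0 \<le> y" unfolding y_def using a by simp
    have x: "0 \<le> a1 * E" unfolding E_def using a1 by simp
    note sb = Sf_bounds[OF hM hd x y]
    have "(a1 - d1) * ind1 z \<le> Sf Md12 Md21 d1 d2 (a1 * E) y"
    proof (cases "1 \<le> E")
      case True
      hence "a1 \<le> a1 * E" using a1 by (simp add: mult_le_cancel_left1)
      thus ?thesis using True sb(3) unfolding ind1_def E_def by simp
    next
      case False thus ?thesis using sb(1) unfolding ind1_def E_def by simp
    qed
    hence "exp (- r * tau) * ((a1 - d1) * ind1 z) \<le> exp (- r * tau) * Sf Md12 Md21 d1 d2 (a1 * E) y"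
      by (rule mult_left_mono) simp
    hence "exp (- r * tau) * (a1 - d1) * ind1 z \<le> Fa a1 a2 1 z"
      unfolding Fa_def TE_Sf E_def y_def by (simp add: mult.assoc)
    thus "psi z * (exp (- r * tau) * (a1 - d1) * ind1 z) \<le> psi z * Fa a1 a2 1 z"
      by (rule mult_left_mono) simp
  qed
  also have "\<dots> = P 1 a1 a2" unfolding price_lb ..
  finally show ?thesis .
qed

lemma P2_pos:
  assumes a: "0 < a1" "d2 < a2"
  shows "0 < P 2 a1 a2"
proof -
  have a2: "0 < a2" using a hd by linarith
  have "0 < exp (- r * tau) * (a2 - d2) * pp2" using a pp2_pos by simp
  also have "exp (- r * tau) * (a2 - d2) * pp2 = (\<integral>z. psi z * (exp (- r * tau) * (a2 - d2) * ind2 z) \<partial>lborel)"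
    unfolding pp2_def by (simp add: mult.left_commute)
  also have "\<dots> \<le> (\<integral>z. psi z * Fa a1 a2 2 z \<partial>lborel)"
  proof (rule integral_mono)
    show "integrable lborel (\<lambda>z. psi z * (exp (- r * tau) * (a2 - d2) * ind2 z))"
      using ind_int(2) by (simp add: mult.left_commute)
    show "integrable lborel (\<lambda>z. psi z * Fa a1 a2 2 z)" by (rule orig_int) (use a2 a in auto)
    fix z :: "real \<times> real"
    define E where "E = exp (mu2 + ka2 * (rho * fst z + ss * snd z))"
    define y where "y = a1 * exp (mu1 + ka1 * fst z)"
    have y: "0 \<le> y" unfolding y_def using a by simp
    have x: "0 \<le> a2 * E" unfolding E_def using a2 by simp
    note sb = Sf_bounds[OF hM(3,4,1,2) hd(2,1) x y]
    have "(a2 - d2) * ind2 z \<le> Sf Md21 Md12 d2 d1 (a2 * E) y"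
    proof (cases "1 \<le> E")
      case True
      hence "a2 \<le> a2 * E" using a2 by (simp add: mult_le_cancel_left1)
      thus ?thesis using True sb(3) unfolding ind2_def E_def by simp
    next
      case False thus ?thesis using sb(1) unfolding ind2_def E_def by simp
    qed
    hence "exp (- r * tau) * ((a2 - d2) * ind2 z) \<le> exp (- r * tau) * Sf Md21 Md12 d2 d1 (a2 * E) y"
      by (rule mult_left_mono) simp
    hence "exp (- r * tau) * (a2 - d2) * ind2 z \<le> Fa a1 a2 2 z"
      unfolding Fa_def TE_Sf E_def y_def by (simp add: mult.assoc)
    thus "psi z * (exp (- r * tau) * (a2 - d2) * ind2 z) \<le> psi z * Fa a1 a2 2 z"
      by (rule mult_left_mono) simp
  qed
  also have "\<dots> = P 2 a1 a2" unfolding price_lb ..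
  finally show ?thesis .
qed

abbreviation Dl :: "nat \<Rightarrow> nat \<Rightarrow> real \<Rightarrow> real \<Rightarrow> real" where
  "Dl i j a1 a2 \<equiv> equity_delta 0 0 Md12 Md21 d1 d2 r sig1 sig2 rho tau i j a1 a2"

lemma D_bounds:
  assumes a: "2*d1 \<le> a1" "2*d2 \<le> a2"
  shows "exp (- r * tau) * pp1 \<le> Dl 1 1 a1 a2"
    "exp (- r * tau) * pp2 \<le> Dl 2 2 a1 a2"
    "\<bar>Dl 1 2 a1 a2\<bar> \<le> exp (- r * tau) * (Md12/(1-Md21*Md12)*(2*d2/a2))"
    "\<bar>Dl 2 1 a1 a2\<bar> \<le> exp (- r * tau) * (Md21/(1-Md12*Md21)*(2*d1/a1))"
proof -
  have a0: "0 < a1" "0 < a2" using a hd by linarith+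
  obtain D11 where D11: "((\<lambda>u. P 1 u a2) has_real_derivative D11) (at a1)" using diff1[of 1, OF _ a0] by auto
  obtain D21 where D21: "((\<lambda>u. P 2 u a2) has_real_derivative D21) (at a1)" using diff1[of 2, OF _ a0] by auto
  obtain D12 where D12: "((\<lambda>u. P 1 a1 u) has_real_derivative D12) (at a2)" using diff2[of 1, OF _ a0] by auto
  obtain D22 where D22: "((\<lambda>u. P 2 a1 u) has_real_derivative D22) (at a2)" using diff2[of 2, OF _ a0] by auto
  have e: "Dl 1 1 a1 a2 = D11" "Dl 2 1 a1 a2 = D21" "Dl 1 2 a1 a2 = D12" "Dl 2 2 a1 a2 = D22"
    unfolding equity_delta_def using DERIV_imp_deriv[OF D11] DERIV_imp_deriv[OF D21]
      DERIV_imp_deriv[OF D12] DERIV_imp_deriv[OF D22] by simp_all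
  have d1p: "0 < a1/2" "0 < a2/2" using a0 by simp_all
  show "exp (- r * tau) * pp1 \<le> Dl 1 1 a1 a2" unfolding e
    by (rule deriv_lower[OF D11 d1p(1)]) (rule quot11[OF a(1) a0(2)])
  show "exp (- r * tau) * pp2 \<le> Dl 2 2 a1 a2" unfolding e
    by (rule deriv_lower[OF D22 d1p(2)]) (rule quot22[OF a0(1) a(2)])
  show "\<bar>Dl 1 2 a1 a2\<bar> \<le> exp (- r * tau) * (Md12/(1-Md21*Md12)*(2*d2/a2))" unfolding e
    by (rule deriv_abs[OF D12 d1p(2)]) (rule quot12[OF a0])
  show "\<bar>Dl 2 1 a1 a2\<bar> \<le> exp (- r * tau) * (Md21/(1-Md12*Md21)*(2*d1/a1))" unfolding e
    by (rule deriv_abs[OF D21 d1p(1)]) (rule quot21[OF a0])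
qed

end

definition covx :: "(nat \<Rightarrow> real) \<Rightarrow> (nat \<Rightarrow> nat \<Rightarrow> real) \<Rightarrow> real \<Rightarrow> real \<Rightarrow> real \<Rightarrow> real \<Rightarrow> real \<Rightarrow> nat \<Rightarrow> nat \<Rightarrow> real" where
  "covx s D a1 a2 sig1 sig2 rho i j =
     (let a = (\<lambda>k::nat. if k = 1 then a1 else a2)
      in \<Sum>k\<in>{1::nat,2}. \<Sum>l\<in>{1::nat,2}.
           (inverse (s i) * D i k * a k) * asset_cov sig1 sig2 rho k l *
           (a l * D j l * inverse (s j)))"

lemma equity_cov_covx:
  "equity_cov Ms12 Ms21 Md12 Md21 d1 d2 r sig1 sig2 rho tau i j a1 a2 =
   covx (\<lambda>m. equity_price Ms12 Ms21 Md12 Md21 d1 d2 r sig1 sig2 rho tau m a1 a2)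
        (\<lambda>m k. equity_delta Ms12 Ms21 Md12 Md21 d1 d2 r sig1 sig2 rho tau m k a1 a2) a1 a2 sig1 sig2 rho i j"
  unfolding equity_cov_def covx_def Let_def ..

definition Phi :: "real \<Rightarrow> real \<Rightarrow> real \<Rightarrow> real \<Rightarrow> real \<Rightarrow> real" where
  "Phi sig1 sig2 rho x y =
     (y * sig1\<^sup>2 + rho * sig1 * sig2 + x * y * (rho * sig1 * sig2) + x * sig2\<^sup>2) /
     sqrt ((sig1\<^sup>2 + 2 * x * (rho * sig1 * sig2) + x\<^sup>2 * sig2\<^sup>2) * (y\<^sup>2 * sig1\<^sup>2 + 2 * y * (rho * sig1 * sig2) + sig2\<^sup>2))"

lemma sum_two: "(\<Sum>k\<in>{1::nat,2}. f k) = f 1 + f 2" by simp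
lemma if_one: "(if (1::nat) = 1 then a else b) = a" and if_two: "(if (2::nat) = 1 then a else b) = b" by simp_all
lemma ac_vals: "asset_cov sig1 sig2 rho 1 1 = sig1\<^sup>2" "asset_cov sig1 sig2 rho 1 2 = rho * sig1 * sig2"
  "asset_cov sig1 sig2 rho 2 1 = rho * sig1 * sig2" "asset_cov sig1 sig2 rho 2 2 = sig2\<^sup>2"
  unfolding asset_cov_def by simp_all

lemma corr_formula:
  fixes s :: "nat \<Rightarrow> real" and D :: "nat \<Rightarrow> nat \<Rightarrow> real"
  assumes s: "0 < s 1" "0 < s 2" and D: "0 < D 1 1" "0 < D 2 2" and a: "0 < a1" "0 < a2"
  shows "covx s D a1 a2 sig1 sig2 rho 1 2 / sqrt (covx s D a1 a2 sig1 sig2 rho 1 1 * covx s D a1 a2 sig1 sig2 rho 2 2)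
    = Phi sig1 sig2 rho (D 1 2 * a2 / (D 1 1 * a1)) (D 2 1 * a1 / (D 2 2 * a2))"
proof -
  define x where "x = D 1 2 * a2 / (D 1 1 * a1)"
  define y where "y = D 2 1 * a1 / (D 2 2 * a2)"
  define l1 where "l1 = D 1 1 * a1 / s 1"
  define l2 where "l2 = D 2 2 * a2 / s 2"
  have l: "0 < l1" "0 < l2" unfolding l1_def l2_def using s D a by simp_all
  have r1: "inverse (s 1) * D 1 1 * a1 = l1" "inverse (s 1) * D 1 2 * a2 = l1 * x"
    "a1 * D 1 1 * inverse (s 1) = l1" "a2 * D 1 2 * inverse (s 1) = l1 * x"
    unfolding l1_def x_def using s D a by (simp_all add: field_simps)
  have r2: "inverse (s 2) * D 2 2 * a2 = l2" "inverse (s 2) * D 2 1 * a1 = l2 * y"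
    "a2 * D 2 2 * inverse (s 2) = l2" "a1 * D 2 1 * inverse (s 2) = l2 * y"
    unfolding l2_def y_def using s D a by (simp_all add: field_simps)
  have c11: "covx s D a1 a2 sig1 sig2 rho 1 1 = l1\<^sup>2 * (sig1\<^sup>2 + 2 * x * (rho * sig1 * sig2) + x\<^sup>2 * sig2\<^sup>2)"
    unfolding covx_def Let_def sum_two if_one if_two ac_vals r1 by (simp add: power2_eq_square algebra_simps)
  have c22: "covx s D a1 a2 sig1 sig2 rho 2 2 = l2\<^sup>2 * (y\<^sup>2 * sig1\<^sup>2 + 2 * y * (rho * sig1 * sig2) + sig2\<^sup>2)"
    unfolding covx_def Let_def sum_two if_one if_two ac_vals r2 by (simp add: power2_eq_square algebra_simps)
  have c12: "covx s D a1 a2 sig1 sig2 rho 1 2 = l1 * l2 * (y * sig1\<^sup>2 + rho * sig1 * sig2 + x * y * (rho * sig1 * sig2) + x * sig2\<^sup>2)"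
    unfolding covx_def Let_def sum_two if_one if_two ac_vals r1 r2 by (simp add: power2_eq_square algebra_simps)
  define B11 where "B11 = sig1\<^sup>2 + 2 * x * (rho * sig1 * sig2) + x\<^sup>2 * sig2\<^sup>2"
  define B22 where "B22 = y\<^sup>2 * sig1\<^sup>2 + 2 * y * (rho * sig1 * sig2) + sig2\<^sup>2"
  define B12 where "B12 = y * sig1\<^sup>2 + rho * sig1 * sig2 + x * y * (rho * sig1 * sig2) + x * sig2\<^sup>2"
  have "sqrt (l1\<^sup>2 * B11 * (l2\<^sup>2 * B22)) = l1 * l2 * sqrt (B11 * B22)"
  proof -
    have "l1\<^sup>2 * B11 * (l2\<^sup>2 * B22) = (l1 * l2)\<^sup>2 * (B11 * B22)" by (simp add: power2_eq_square algebra_simps)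
    thus ?thesis using l by (simp add: real_sqrt_mult)
  qed
  hence "covx s D a1 a2 sig1 sig2 rho 1 2 / sqrt (covx s D a1 a2 sig1 sig2 rho 1 1 * covx s D a1 a2 sig1 sig2 rho 2 2)
      = (l1 * l2 * B12) / (l1 * l2 * sqrt (B11 * B22))"
    unfolding c11 c22 c12 B11_def[symmetric] B22_def[symmetric] B12_def[symmetric] by simp
  also have "\<dots> = B12 / sqrt (B11 * B22)" using l by simp
  finally show ?thesis unfolding Phi_def B11_def B22_def B12_def x_def y_def .
qed

lemma Phi_tendsto:
  assumes sg: "0 < sig1" "0 < sig2" and x: "(x \<longlongrightarrow> 0) F" and y: "(y \<longlongrightarrow> 0) F"
  shows "((\<lambda>n. Phi sig1 sig2 rho (x n) (y n)) \<longlongrightarrow> rho) F"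
proof -
  have "((\<lambda>n. Phi sig1 sig2 rho (x n) (y n)) \<longlongrightarrow>
     (0 * sig1\<^sup>2 + rho * sig1 * sig2 + 0 * 0 * (rho * sig1 * sig2) + 0 * sig2\<^sup>2) /
     sqrt ((sig1\<^sup>2 + 2 * 0 * (rho * sig1 * sig2) + 0\<^sup>2 * sig2\<^sup>2) * (0\<^sup>2 * sig1\<^sup>2 + 2 * 0 * (rho * sig1 * sig2) + sig2\<^sup>2))) F"
    unfolding Phi_def using sg by (intro tendsto_intros x y) simp_all
  moreover have "(0 * sig1\<^sup>2 + rho * sig1 * sig2 + 0 * 0 * (rho * sig1 * sig2) + 0 * sig2\<^sup>2) /
     sqrt ((sig1\<^sup>2 + 2 * 0 * (rho * sig1 * sig2) + 0\<^sup>2 * sig2\<^sup>2) * (0\<^sup>2 * sig1\<^sup>2 + 2 * 0 * (rho * sig1 * sig2) + sig2\<^sup>2)) = rho"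
    using sg by (simp add: real_sqrt_mult)
  ultimately show ?thesis by simp
qed


lemma null_bound:
  fixes e :: "nat \<Rightarrow> real" and a :: "nat \<Rightarrow> real"
  assumes a: "filterlim a at_top sequentially" and ev: "eventually (\<lambda>n. \<bar>e n\<bar> \<le> K / (c * a n)) sequentially"
    and c: "0 < c"
  shows "e \<longlonglongrightarrow> 0"
proof (rule Lim_null_comparison)
  show "eventually (\<lambda>n. norm (e n) \<le> K / (c * a n)) sequentially" using ev by simp
  have "(\<lambda>n. (K / c) * inverse (a n)) \<longlonglongrightarrow> (K / c) * 0"
    by (intro tendsto_mult tendsto_const tendsto_inverse_0_at_top a)
  thus "(\<lambda>n. K / (c * a n)) \<longlonglongrightarrow> 0" by (simp add: field_simps)
qed

theorem mainTheorem4: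
  fixes Md12 Md21 d1 d2 r sig1 sig2 rho tau :: real
  assumes "0 \<le> Md12" "Md12 < 1" "0 \<le> Md21" "Md21 < 1"
    and "0 < d1" "0 < d2"
    and "0 < sig1" "0 < sig2"
    and "-1 < rho" "rho < 1"
    and "0 < tau"
  shows "\<forall>a1 a2 :: nat \<Rightarrow> real.
           filterlim a1 at_top sequentially \<and> filterlim a2 at_top sequentially \<and>
           (\<exists>c C. 0 < c \<and> (\<forall>\<^sub>F n in sequentially. c \<le> a1 n / a2 n \<and> a1 n / a2 n \<le> C))
           \<longrightarrow> (\<lambda>n. equity_corr 0 0 Md12 Md21 d1 d2 r sig1 sig2 rho tau (a1 n) (a2 n))
                 \<longlonglongrightarrow> rho"
proof (intro allI impI)
  fix a1 a2 :: "nat \<Rightarrow> real"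
  assume H: "filterlim a1 at_top sequentially \<and> filterlim a2 at_top sequentially \<and>
           (\<exists>c C. 0 < c \<and> (\<forall>\<^sub>F n in sequentially. c \<le> a1 n / a2 n \<and> a1 n / a2 n \<le> C))"
  have l1: "filterlim a1 at_top sequentially" and l2: "filterlim a2 at_top sequentially" using H by auto
  interpret m: mdl Md12 Md21 d1 d2 r sig1 sig2 rho tau using assms by unfold_locales
  define c1 where "c1 = exp (- r * tau) * m.pp1"
  define c2 where "c2 = exp (- r * tau) * m.pp2"
  have c: "0 < c1" "0 < c2" unfolding c1_def c2_def using m.pp1_pos m.pp2_pos by simp_all
  define K1 where "K1 = exp (- r * tau) * (Md12/(1-Md21*Md12)*(2*d2))"
  define K2 where "K2 = exp (- r * tau) * (Md21/(1-Md12*Md21)*(2*d1))"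
  define e1 where "e1 n = m.Dl 1 2 (a1 n) (a2 n) * a2 n / (m.Dl 1 1 (a1 n) (a2 n) * a1 n)" for n
  define e2 where "e2 n = m.Dl 2 1 (a1 n) (a2 n) * a1 n / (m.Dl 2 2 (a1 n) (a2 n) * a2 n)" for n
  have ev: "eventually (\<lambda>n. 2*d1 \<le> a1 n \<and> 2*d2 \<le> a2 n) sequentially"
    using l1 l2 unfolding filterlim_at_top by (intro eventually_conj) auto
  have pos: "0 < a1 n" "0 < a2 n" "d1 < a1 n" "d2 < a2 n" if "2*d1 \<le> a1 n \<and> 2*d2 \<le> a2 n" for n
    using that assms(5,6) by linarith+
  have eq: "eventually (\<lambda>n. Phi sig1 sig2 rho (e1 n) (e2 n) =
      equity_corr 0 0 Md12 Md21 d1 d2 r sig1 sig2 rho tau (a1 n) (a2 n)) sequentially"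
  proof (rule eventually_mono[OF ev])
    fix n assume h: "2*d1 \<le> a1 n \<and> 2*d2 \<le> a2 n"
    note p = pos[OF h]
    note db = m.D_bounds[of "a1 n" "a2 n"]
    have D11: "0 < m.Dl 1 1 (a1 n) (a2 n)" using db(1) h c(1) unfolding c1_def by linarith
    have D22: "0 < m.Dl 2 2 (a1 n) (a2 n)" using db(2) h c(2) unfolding c2_def by linarith
    show "Phi sig1 sig2 rho (e1 n) (e2 n) = equity_corr 0 0 Md12 Md21 d1 d2 r sig1 sig2 rho tau (a1 n) (a2 n)"
      unfolding equity_corr_def equity_cov_covx e1_def e2_def
      by (rule corr_formula[symmetric]) (use m.P1_pos[OF p(3) p(2)] m.P2_pos[OF p(1) p(4)] D11 D22 p in auto)
  qed
  have e1b: "eventually (\<lambda>n. \<bar>e1 n\<bar> \<le> K1 / (c1 * a1 n)) sequentially"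
  proof (rule eventually_mono[OF ev])
    fix n assume h: "2*d1 \<le> a1 n \<and> 2*d2 \<le> a2 n"
    note p = pos[OF h]
    note db = m.D_bounds[of "a1 n" "a2 n"]
    have D11: "c1 \<le> m.Dl 1 1 (a1 n) (a2 n)" using db(1) h unfolding c1_def by simp
    have D12: "\<bar>m.Dl 1 2 (a1 n) (a2 n)\<bar> \<le> K1 / a2 n" using db(3) h unfolding K1_def by (simp add: field_simps)
    have "\<bar>e1 n\<bar> = \<bar>m.Dl 1 2 (a1 n) (a2 n)\<bar> * a2 n / (m.Dl 1 1 (a1 n) (a2 n) * a1 n)"
      unfolding e1_def using p D11 c by (simp add: abs_mult abs_divide)
    also have "\<dots> \<le> (K1 / a2 n) * a2 n / (c1 * a1 n)"
    proof (rule frac_le)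
      show num: "\<bar>m.Dl 1 2 (a1 n) (a2 n)\<bar> * a2 n \<le> (K1 / a2 n) * a2 n" by (rule mult_right_mono[OF D12]) (use p in simp)
      have "0 \<le> \<bar>m.Dl 1 2 (a1 n) (a2 n)\<bar> * a2 n" using p by simp
      thus "0 \<le> (K1 / a2 n) * a2 n" using num by linarith
      show "0 < c1 * a1 n" using c p by simp
      show "c1 * a1 n \<le> m.Dl 1 1 (a1 n) (a2 n) * a1 n" by (rule mult_right_mono[OF D11]) (use p in simp)
    qed
    also have "\<dots> = K1 / (c1 * a1 n)" using p by simp
    finally show "\<bar>e1 n\<bar> \<le> K1 / (c1 * a1 n)" .
  qed
  have e2b: "eventually (\<lambda>n. \<bar>e2 n\<bar> \<le> K2 / (c2 * a2 n)) sequentially"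
  proof (rule eventually_mono[OF ev])
    fix n assume h: "2*d1 \<le> a1 n \<and> 2*d2 \<le> a2 n"
    note p = pos[OF h]
    note db = m.D_bounds[of "a1 n" "a2 n"]
    have D22: "c2 \<le> m.Dl 2 2 (a1 n) (a2 n)" using db(2) h unfolding c2_def by simp
    have D21: "\<bar>m.Dl 2 1 (a1 n) (a2 n)\<bar> \<le> K2 / a1 n" using db(4) h unfolding K2_def by (simp add: field_simps)
    have "\<bar>e2 n\<bar> = \<bar>m.Dl 2 1 (a1 n) (a2 n)\<bar> * a1 n / (m.Dl 2 2 (a1 n) (a2 n) * a2 n)"
      unfolding e2_def using p D22 c by (simp add: abs_mult abs_divide)
    also have "\<dots> \<le> (K2 / a1 n) * a1 n / (c2 * a2 n)"
    proof (rule frac_le)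
      show num: "\<bar>m.Dl 2 1 (a1 n) (a2 n)\<bar> * a1 n \<le> (K2 / a1 n) * a1 n" by (rule mult_right_mono[OF D21]) (use p in simp)
      have "0 \<le> \<bar>m.Dl 2 1 (a1 n) (a2 n)\<bar> * a1 n" using p by simp
      thus "0 \<le> (K2 / a1 n) * a1 n" using num by linarith
      show "0 < c2 * a2 n" using c p by simp
      show "c2 * a2 n \<le> m.Dl 2 2 (a1 n) (a2 n) * a2 n" by (rule mult_right_mono[OF D22]) (use p in simp)
    qed
    also have "\<dots> = K2 / (c2 * a2 n)" using p by simp
    finally show "\<bar>e2 n\<bar> \<le> K2 / (c2 * a2 n)" .
  qed
  have "e1 \<longlonglongrightarrow> 0" by (rule null_bound[OF l1 e1b c(1)])
  moreover have "e2 \<longlonglongrightarrow> 0" by (rule null_bound[OF l2 e2b c(2)])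
  ultimately have "(\<lambda>n. Phi sig1 sig2 rho (e1 n) (e2 n)) \<longlonglongrightarrow> rho"
    using Phi_tendsto[OF assms(7,8)] by blast
  thus "(\<lambda>n. equity_corr 0 0 Md12 Md21 d1 d2 r sig1 sig2 rho tau (a1 n) (a2 n)) \<longlonglongrightarrow> rho"
    by (rule Lim_transform_eventually[OF _ eq])
qed


end
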